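(* Let $\epsilon>0$ and $\alpha_f(\sigma):=\sup_{\omega\in\mathbb{R}} f(\sigma+j\omega)$ for $\sigma>\alpha_0$. Then there is a unique $\sigma^*\in(\alpha_0,\infty)$ with $\alpha_f(\sigma^* )=1/\epsilon$, and $\sigma^*=\alpha_\epsilon$, where $\alpha_\epsilon:=\sup\{\Re\lambda:\ \lambda\in\mathbb{C},\ \det F(\lambda)\neq 0,\ f(\lambda)=1/\epsilon\}$ is the pseudospectral abscissa.
   Context: Fix integers $n\ge 1$, $m\ge 0$, matrices $A_0,\dots,A_m\in\mathbb{C}^{n\times n}$, delays $\tau_0=0$ and $\tau_1,\dots,\tau_m\ge 0$, and weights $w_0,\dots,w_m>0$. Define the matrix function $F(\lambda)=\lambda I_n-\sum_{i=0}^m A_i e^{-\lambda\tau_i}$ for $\lambda\in\mathbb{C}$. The characteristic roots are the solutions of $\det F(\lambda)=0$; this set is nonempty, and every right half-plane $\{\Re\lambda\ge c\}$ contains only finitely many of them, so the spectral abscissa $\alpha_0=\sup\{\Re\lambda:\det F(\lambda)=0\}$ is a finite real number attained by some root. Define $w(\lambda)=\sum_{i=0}^m |e^{-\lambda\tau_i}|/w_i$ and, for $\lambda$ not a characteristic root, $f(\lambda)=w(\lambda)\,\sigma_{\max}(F(\lambda)^{-1})$, where $\sigma_{\max}$ denotes the largest singular value. *)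

theory Defs
  imports "HOL-Analysis.Analysis"
begin

definition conj_transpose :: "complex^'n^'n \<Rightarrow> complex^'n^'n" where
  "conj_transpose M = (\<chi> i j. cnj (M $ j $ i))"

text \<open>Largest singular value: square root of the largest eigenvalue of M^H M
  (these eigenvalues are real and nonnegative).\<close>
definition sigma_max :: "complex^'n^'n \<Rightarrow> real" where
  "sigma_max M = Max {sqrt (Re \<mu>) | \<mu>. det ((\<chi> i j. if i = j then \<mu> else 0) - conj_transpose M ** M) = 0}"

definition Fm :: "nat \<Rightarrow> (nat \<Rightarrow> complex^'n^'n) \<Rightarrow> (nat \<Rightarrow> real) \<Rightarrow> complex \<Rightarrow> complex^'n^'n" where
  "Fm m A \<tau> z = (\<chi> i j. if i = j then z else 0)
      - (\<Sum>i\<in>{0..m}. (\<chi> r c. exp (- z * complex_of_real (\<tau> i)) * (A i $ r $ c)))"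

definition wfun :: "nat \<Rightarrow> (nat \<Rightarrow> real) \<Rightarrow> (nat \<Rightarrow> real) \<Rightarrow> complex \<Rightarrow> real" where
  "wfun m \<tau> w z = (\<Sum>i\<in>{0..m}. cmod (exp (- z * complex_of_real (\<tau> i))) / w i)"

definition ffun :: "nat \<Rightarrow> (nat \<Rightarrow> complex^'n^'n) \<Rightarrow> (nat \<Rightarrow> real) \<Rightarrow> (nat \<Rightarrow> real) \<Rightarrow> complex \<Rightarrow> real" where
  "ffun m A \<tau> w z = wfun m \<tau> w z * sigma_max (matrix_inv (Fm m A \<tau> z))"

definition alpha0 :: "nat \<Rightarrow> (nat \<Rightarrow> complex^'n^'n) \<Rightarrow> (nat \<Rightarrow> real) \<Rightarrow> real" where
  "alpha0 m A \<tau> = Sup {Re z | z. det (Fm m A \<tau> z) = 0}"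

definition alpha_f :: "nat \<Rightarrow> (nat \<Rightarrow> complex^'n^'n) \<Rightarrow> (nat \<Rightarrow> real) \<Rightarrow> (nat \<Rightarrow> real) \<Rightarrow> real \<Rightarrow> real" where
  "alpha_f m A \<tau> w \<sigma> = (SUP \<omega>::real. ffun m A \<tau> w (Complex \<sigma> \<omega>))"

definition alpha_eps :: "nat \<Rightarrow> (nat \<Rightarrow> complex^'n^'n) \<Rightarrow> (nat \<Rightarrow> real) \<Rightarrow> (nat \<Rightarrow> real) \<Rightarrow> real \<Rightarrow> real" where
  "alpha_eps m A \<tau> w \<epsilon> = Sup {Re z | z. det (Fm m A \<tau> z) \<noteq> 0 \<and> ffun m A \<tau> w z = 1 / \<epsilon>}"

end

theory Submission
  imports Defs "HOL-Complex_Analysis.Complex_Analysis"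
begin


lemma inner_cmult: "inner ((a::complex) * b) c = inner b (cnj a * c)"
  by (simp add: inner_complex_def algebra_simps)

lemma adj_inner:
  fixes M :: "complex^'n^'n"
  shows "inner (M *v x) y = inner x (conj_transpose M *v y)"
proof -
  have "inner (M *v x) y = (\<Sum>i\<in>UNIV. \<Sum>j\<in>UNIV. inner (M$i$j * x$j) (y$i))"
    by (simp add: inner_vec_def matrix_vector_mult_def inner_sum_left)
  also have "\<dots> = (\<Sum>j\<in>UNIV. \<Sum>i\<in>UNIV. inner (x$j) (cnj (M$i$j) * y$i))"
    by (subst sum.swap) (simp add: inner_cmult)
  also have "\<dots> = inner x (conj_transpose M *v y)"
    by (simp add: inner_vec_def matrix_vector_mult_def inner_sum_right conj_transpose_def)
  finally show ?thesis .
qed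

lemma det0_kernel:
  fixes B :: "complex^'n^'n"
  assumes "det B = 0"
  obtains x where "x \<noteq> 0" "B *v x = 0"
proof -
  have "\<not> inj ((*v) B)"
    using det_nz_iff_inj_gen[of "(*v) B"] assms
    by (simp add: matrix_of_matrix_vector_mul matrix_vector_mul_linear_gen)
  then obtain x y where "x \<noteq> y" "B *v x = B *v y" unfolding inj_def by blast
  then show ?thesis using that[of "x - y"] by (simp add: matrix_vector_mult_diff_distrib)
qed

lemma kernel_det0:
  fixes B :: "complex^'n^'n"
  assumes "x \<noteq> 0" "B *v x = 0"
  shows "det B = 0"
proof (rule ccontr)
  assume "det B \<noteq> 0"
  then have "inj ((*v) B)"
    using det_nz_iff_inj_gen[of "(*v) B"]
    by (simp add: matrix_of_matrix_vector_mul matrix_vector_mul_linear_gen)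
  moreover have "B *v 0 = 0" by simp
  ultimately show False using assms unfolding inj_def by metis
qed

lemma mat_diag_mult: "(\<chi> i j. if i = j then \<mu> else 0) *v x = \<mu> *s (x::complex^'n)"
proof -
  have "\<And>i j. (if i = j then \<mu> else 0) * x$j = (if i = j then \<mu> * x$j else 0)" by simp
  then show ?thesis by (simp add: vec_eq_iff matrix_vector_mult_def)
qed

lemma inner_smult_self: "inner ((\<mu>::complex) *s x) (x::complex^'n) = Re \<mu> * (norm x)^2"
proof -
  have "inner (\<mu> *s x) x = (\<Sum>i\<in>UNIV. Re \<mu> * (norm (x$i))^2)"
    unfolding inner_vec_def
    by (intro sum.cong refl) (simp add: inner_complex_def cmod_def algebra_simps power2_eq_square)
  also have "\<dots> = Re \<mu> * (norm x)^2"
    by (simp add: norm_vec_def L2_set_def sum_distrib_left sum_nonneg)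
  finally show ?thesis .
qed

lemma inner_smult_ii: "inner ((\<mu>::complex) *s x) (\<i> *s (x::complex^'n)) = Im \<mu> * (norm x)^2"
proof -
  have "inner (\<mu> *s x) (\<i> *s x) = (\<Sum>i\<in>UNIV. Im \<mu> * (norm (x$i))^2)"
    unfolding inner_vec_def
    by (intro sum.cong refl) (simp add: inner_complex_def cmod_def algebra_simps power2_eq_square)
  also have "\<dots> = Im \<mu> * (norm x)^2"
    by (simp add: norm_vec_def L2_set_def sum_distrib_left sum_nonneg)
  finally show ?thesis .
qed

lemma ofreal_smult: "complex_of_real c *s (x::complex^'n) = c *\<^sub>R x"
proof -
  have "(c *\<^sub>R x)$i = complex_of_real c * x$i" for i
  proof -
    have "(c *\<^sub>R x)$i = c *\<^sub>R x$i" by simp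
    also have "\<dots> = complex_of_real c * x$i" by (rule scaleR_conv_of_real)
    finally show ?thesis .
  qed
  then show ?thesis by (simp add: vec_eq_iff)
qed

lemma mvscaleR: "(M::complex^'n^'n) *v (c *\<^sub>R x) = c *\<^sub>R (M *v x)"
  using bounded_linear.linear[OF matrix_vector_mul_bounded_linear[of M]]
  by (simp add: linear_scale)

lemma sigma_max_char:
  fixes M :: "complex^'n^'n"
  shows "\<exists>x0. norm x0 = 1 \<and> norm (M *v x0) = sigma_max M \<and> (\<forall>y. norm (M *v y) \<le> sigma_max M * norm y)"
proof -
  define H where "H = conj_transpose M ** M"
  have Hv: "\<And>x. H *v x = conj_transpose M *v (M *v x)" by (simp add: H_def matrix_vector_mul_assoc)
  have Hin: "inner (H *v x) y = inner (M *v x) (M *v y)" for x y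
  proof -
    have "inner (H *v x) y = inner y (conj_transpose M *v (M *v x))" by (simp add: Hv inner_commute)
    also have "\<dots> = inner (M *v y) (M *v x)" by (rule adj_inner[symmetric])
    finally show ?thesis by (simp add: inner_commute)
  qed
  have cont: "continuous_on (sphere 0 1) (\<lambda>y. norm (M *v y))"
    by (intro continuous_intros linear_continuous_on matrix_vector_mul_bounded_linear)
  have "compact (sphere (0::complex^'n) 1)" by simp
  moreover have "sphere (0::complex^'n) 1 \<noteq> {}" by simp
  ultimately obtain x0 where x0: "x0 \<in> sphere 0 1" and x0max: "\<And>y. y \<in> sphere 0 1 \<Longrightarrow> norm (M *v y) \<le> norm (M *v x0)"
    using continuous_attains_sup[OF _ _ cont] by blast
  have nx0: "norm x0 = 1" using x0 by simp
  define r where "r = norm (M *v x0)"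
  define q where "q = r^2"
  have bound: "norm (M *v y) \<le> r * norm y" for y
  proof (cases "y = 0")
    case True then show ?thesis by simp
  next
    case False
    have "(1/norm y) *\<^sub>R y \<in> sphere 0 1" using False by simp
    then have "norm (M *v ((1/norm y) *\<^sub>R y)) \<le> r" using x0max r_def by blast
    moreover have "M *v ((1/norm y) *\<^sub>R y) = (1/norm y) *\<^sub>R (M *v y)" by (rule mvscaleR)
    ultimately have "norm (M *v y) / norm y \<le> r" by simp
    then show ?thesis using False by (simp add: divide_le_eq mult.commute)
  qed
  have bound2: "(norm (M *v y))^2 \<le> q * (norm y)^2" for y
    using power_mono[OF bound[of y]] by (simp add: q_def power_mult_distrib)
  define v where "v = complex_of_real q *s x0 - H *v x0"
  have vin: "inner v y = q * inner x0 y - inner (M *v x0) (M *v y)" for y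
    by (simp add: v_def ofreal_smult inner_diff_left Hin)
  have v0: "v = 0"
  proof (rule ccontr)
    assume "v \<noteq> 0"
    define n2 where "n2 = (norm v)^2"
    have n2pos: "n2 > 0" using \<open>v \<noteq> 0\<close> by (simp add: n2_def)
    define b where "b = q * (norm v)^2 - (norm (M *v v))^2"
    have b0: "b \<ge> 0" using bound2[of v] by (simp add: b_def)
    define s where "s = n2 / (b + 1)"
    have s0: "s > 0" using n2pos b0 by (simp add: s_def)
    define y where "y = x0 - s *\<^sub>R v"
    have My: "M *v y = M *v x0 - s *\<^sub>R (M *v v)"
      by (simp add: y_def matrix_vector_mult_diff_distrib mvscaleR)
    have e1: "(norm (M *v y))^2 = q - 2 * s * inner (M *v x0) (M *v v) + s^2 * (norm (M *v v))^2"
      unfolding My power2_norm_eq_inner q_def r_def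
      by (simp add: inner_diff_left inner_diff_right inner_commute power2_eq_square algebra_simps)
    have x00: "inner x0 x0 = 1" by (metis power2_norm_eq_inner nx0 one_power2)
    have e2: "(norm y)^2 = 1 - 2 * s * inner x0 v + s^2 * n2"
      unfolding y_def power2_norm_eq_inner n2_def
      using x00 by (simp add: inner_diff_left inner_diff_right inner_commute power2_eq_square algebra_simps)
    have vv: "n2 = q * inner x0 v - inner (M *v x0) (M *v v)"
      using vin[of v] by (simp add: n2_def power2_norm_eq_inner)
    have "q - 2 * s * inner (M *v x0) (M *v v) + s^2 * (norm (M *v v))^2 \<le> q * (1 - 2 * s * inner x0 v + s^2 * n2)"
      using bound2[of y] e1 e2 by simp
    moreover have "q * (1 - 2 * s * inner x0 v + s^2 * n2) = q - 2 * s * (q * inner x0 v) + s^2 * (q * n2)"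
      by (simp add: algebra_simps)
    moreover have "s^2 * b = s^2 * (q * n2) - s^2 * (norm (M *v v))^2"
      by (simp add: b_def n2_def right_diff_distrib)
    moreover have "2 * s * (q * inner x0 v - inner (M *v x0) (M *v v)) = 2 * s * (q * inner x0 v) - 2 * s * inner (M *v x0) (M *v v)"
      by (simp add: right_diff_distrib)
    ultimately have "2 * s * (q * inner x0 v - inner (M *v x0) (M *v v)) \<le> s^2 * b"
      by linarith
    then have "2 * s * n2 \<le> s^2 * b" by (subst vv)
    then have "s * (2 * n2) \<le> s * (s * b)" by (simp add: power2_eq_square mult.assoc)
    then have "2 * n2 \<le> s * b" using s0 by (rule mult_left_le_imp_le)
    moreover have "s * b < n2"
    proof -
      have "s * b = n2 * (b / (b+1))" unfolding s_def by (simp add: divide_inverse mult_ac)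
      also have "\<dots> < n2 * 1" using n2pos b0 by (intro mult_strict_left_mono) auto
      finally show ?thesis by simp
    qed
    ultimately show False using n2pos by simp
  qed
  define Eset where "Eset = {\<mu>. det ((\<chi> i j. if i = j then \<mu> else 0) - H) = 0}"
  have eigv: "\<exists>x. x \<noteq> 0 \<and> H *v x = \<mu> *s x" if "\<mu> \<in> Eset" for \<mu>
  proof -
    have "det ((\<chi> i j. if i = j then \<mu> else 0) - H) = 0" using that unfolding Eset_def by simp
    then obtain x where x: "x \<noteq> 0" "((\<chi> i j. if i = j then \<mu> else 0) - H) *v x = 0"
      by (rule det0_kernel)
    have "((\<chi> i j. if i = j then \<mu> else 0) - H) *v x = \<mu> *s x - H *v x"
      by (simp only: matrix_vector_mult_diff_rdistrib mat_diag_mult)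
    then have "\<mu> *s x - H *v x = 0" using x(2) by simp
    then have "H *v x = \<mu> *s x" by simp
    then show ?thesis using x(1) by blast
  qed
  have qE: "complex_of_real q \<in> Eset"
  proof -
    have "((\<chi> i j. if i = j then complex_of_real q else 0) - H) *v x0 = complex_of_real q *s x0 - H *v x0"
      by (simp only: matrix_vector_mult_diff_rdistrib mat_diag_mult)
    then have "((\<chi> i j. if i = j then complex_of_real q else 0) - H) *v x0 = 0"
      using v0 by (simp only: v_def)
    moreover have "x0 \<noteq> 0" using nx0 by auto
    ultimately have "det ((\<chi> i j. if i = j then complex_of_real q else 0) - H) = 0" by (rule kernel_det0[rotated])
    then show ?thesis unfolding Eset_def by simp
  qed
  have eigprops: "Im \<mu> = 0 \<and> 0 \<le> Re \<mu> \<and> Re \<mu> \<le> q" if "x \<noteq> 0" "H *v x = \<mu> *s x" for x \<mu>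
  proof -
    have nx: "(norm x)^2 > 0" using that by simp
    have r1: "Re \<mu> * (norm x)^2 = (norm (M *v x))^2"
    proof -
      have "Re \<mu> * (norm x)^2 = inner (\<mu> *s x) x" by (rule inner_smult_self[symmetric])
      also have "\<dots> = inner (H *v x) x" using that(2) by simp
      also have "\<dots> = inner (M *v x) (M *v x)" by (rule Hin)
      also have "\<dots> = (norm (M *v x))^2" by (rule power2_norm_eq_inner[symmetric])
      finally show ?thesis .
    qed
    have r2: "Im \<mu> * (norm x)^2 = 0"
    proof -
      have "Im \<mu> * (norm x)^2 = inner (\<mu> *s x) (\<i> *s x)" by (rule inner_smult_ii[symmetric])
      also have "\<dots> = inner (H *v x) (\<i> *s x)" using that(2) by simp
      also have "\<dots> = inner (M *v x) (M *v (\<i> *s x))" by (rule Hin)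
      also have "\<dots> = inner (M *v x) (\<i> *s (M *v x))" by (simp only: vector_scalar_commute)
      also have "\<dots> = 0"
        by (simp add: inner_vec_def inner_complex_def)
      finally show ?thesis .
    qed
    have "Im \<mu> = 0" using r2 nx by simp
    moreover have "0 \<le> Re \<mu>"
    proof -
      have "0 \<le> Re \<mu> * (norm x)^2" using r1 by simp
      then show ?thesis using nx by (simp add: zero_le_mult_iff)
    qed
    moreover have "Re \<mu> \<le> q"
    proof -
      have "Re \<mu> * (norm x)^2 \<le> q * (norm x)^2" using r1 bound2[of x] by simp
      then show ?thesis using nx by simp
    qed
    ultimately show ?thesis by simp
  qed
  define ev where "ev \<mu> = (SOME x. x \<noteq> 0 \<and> H *v x = \<mu> *s x)" for \<mu>
  have evp: "ev \<mu> \<noteq> 0 \<and> H *v ev \<mu> = \<mu> *s ev \<mu>" if "\<mu> \<in> Eset" for \<mu>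
    unfolding ev_def by (rule someI_ex[OF eigv[OF that]])
  have realsc: "\<mu> *s x = Re \<mu> *\<^sub>R x" if "Im \<mu> = 0" for \<mu> and x :: "complex^'n"
  proof -
    have "\<mu> = complex_of_real (Re \<mu>)" using that by (simp add: complex_eq_iff)
    then have "\<mu> *s x = complex_of_real (Re \<mu>) *s x" by simp
    then show ?thesis by (simp only: ofreal_smult)
  qed
  have orth: "inner (ev \<mu>1) (ev \<mu>2) = 0" if "\<mu>1 \<in> Eset" "\<mu>2 \<in> Eset" "\<mu>1 \<noteq> \<mu>2" for \<mu>1 \<mu>2
  proof -
    define x1 where "x1 = ev \<mu>1"
    define x2 where "x2 = ev \<mu>2"
    have h1: "x1 \<noteq> 0" "H *v x1 = \<mu>1 *s x1" using evp[OF that(1)] x1_def by auto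
    have h2: "x2 \<noteq> 0" "H *v x2 = \<mu>2 *s x2" using evp[OF that(2)] x2_def by auto
    have i1: "Im \<mu>1 = 0" using eigprops[OF h1] by simp
    have i2: "Im \<mu>2 = 0" using eigprops[OF h2] by simp
    have "Re \<mu>1 * inner x1 x2 = inner (H *v x1) x2" using h1(2) realsc[OF i1] by simp
    also have "\<dots> = inner (M *v x1) (M *v x2)" by (rule Hin)
    also have "\<dots> = inner (M *v x2) (M *v x1)" by (rule inner_commute)
    also have "\<dots> = inner (H *v x2) x1" by (rule Hin[symmetric])
    also have "\<dots> = Re \<mu>2 * inner x1 x2" using h2(2) realsc[OF i2] by (simp add: inner_commute)
    finally have "(Re \<mu>1 - Re \<mu>2) * inner x1 x2 = 0" by (simp add: left_diff_distrib)
    moreover have "Re \<mu>1 \<noteq> Re \<mu>2" using i1 i2 that(3) by (simp add: complex_eq_iff)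
    ultimately show ?thesis by (simp add: x1_def x2_def)
  qed
  have injev: "inj_on ev Eset"
  proof (rule inj_onI)
    fix \<mu>1 \<mu>2 assume a: "\<mu>1 \<in> Eset" "\<mu>2 \<in> Eset" "ev \<mu>1 = ev \<mu>2"
    define x where "x = ev \<mu>1"
    have "x \<noteq> 0" "H *v x = \<mu>1 *s x" using evp[OF a(1)] x_def by auto
    moreover have "H *v x = \<mu>2 *s x" using evp[OF a(2)] x_def a(3) by auto
    ultimately have e: "\<mu>1 *s x = \<mu>2 *s x" "x \<noteq> 0" by auto
    then obtain i where "x$i \<noteq> 0" by (auto simp: vec_eq_iff)
    moreover have "(\<mu>1 *s x)$i = (\<mu>2 *s x)$i" using e(1) by (rule arg_cong)
    then have "\<mu>1 * x$i = \<mu>2 * x$i" by (simp only: vector_smult_component)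
    ultimately show "\<mu>1 = \<mu>2" by simp
  qed
  have "pairwise orthogonal (ev ` Eset)"
    unfolding pairwise_def orthogonal_def using orth by blast
  moreover have "0 \<notin> ev ` Eset" using evp by fastforce
  ultimately have "independent (ev ` Eset)" by (rule pairwise_orthogonal_independent)
  then have "finite (ev ` Eset)" using independent_bound by blast
  then have finE: "finite Eset" using injev finite_imageD by blast
  have Sset: "{sqrt (Re \<mu>) | \<mu>. det ((\<chi> i j. if i = j then \<mu> else 0) - conj_transpose M ** M) = 0}
     = (\<lambda>\<mu>. sqrt (Re \<mu>)) ` Eset" unfolding Eset_def H_def by blast
  have r0: "r \<ge> 0" by (simp add: r_def)
  have "sigma_max M = Max ((\<lambda>\<mu>. sqrt (Re \<mu>)) ` Eset)" unfolding sigma_max_def Sset ..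
  also have "\<dots> = sqrt q"
  proof (rule Max_eqI)
    show "finite ((\<lambda>\<mu>. sqrt (Re \<mu>)) ` Eset)" using finE by simp
    show "sqrt q \<in> (\<lambda>\<mu>. sqrt (Re \<mu>)) ` Eset" using qE by force
    fix y assume "y \<in> (\<lambda>\<mu>. sqrt (Re \<mu>)) ` Eset"
    then obtain \<mu> where "\<mu> \<in> Eset" "y = sqrt (Re \<mu>)" by blast
    then show "y \<le> sqrt q" using eigprops evp by (meson real_sqrt_le_mono)
  qed
  also have "\<dots> = r" using r0 by (simp add: q_def)
  finally have sr: "sigma_max M = r" .
  show ?thesis
  proof (intro exI conjI allI)
    show "norm x0 = 1" by (rule nx0)
    show "norm (M *v x0) = sigma_max M" using sr r_def by simp
    fix y show "norm (M *v y) \<le> sigma_max M * norm y" using sr bound by simp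
  qed
qed




lemma sm_bound: "norm ((M::complex^'n^'n) *v y) \<le> sigma_max M * norm y"
  using sigma_max_char[of M] by blast

lemma sm_attain: obtains x0 where "norm x0 = 1" "norm ((M::complex^'n^'n) *v x0) = sigma_max M"
  using sigma_max_char[of M] by blast

lemma sm_nonneg: "sigma_max (M::complex^'n^'n) \<ge> 0"
  by (metis sm_attain norm_ge_zero)

lemma norm_axis_c: "norm (axis k (1::complex) :: complex^'n) = 1"
proof -
  have "(\<Sum>i\<in>UNIV. (norm ((axis k (1::complex) :: complex^'n) $ i))^2) = (\<Sum>i\<in>UNIV. if i = k then 1 else 0)"
    by (intro sum.cong) (auto simp: axis_def)
  then show ?thesis by (simp add: norm_vec_def L2_set_def)
qed

lemma mv_axis: "((M::complex^'n^'n) *v axis j 1) $ i = M$i$j"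
proof -
  have "(M *v axis j 1) $ i = (\<Sum>k\<in>UNIV. if k = j then M$i$k else 0)"
    by (simp add: matrix_vector_mult_def axis_def if_distrib cong: if_cong)
  then show ?thesis by simp
qed

lemma sm_entry: "norm ((M::complex^'n^'n) $ i $ j) \<le> sigma_max M"
proof -
  have "norm (M$i$j) = norm ((M *v axis j 1) $ i)" by (simp add: mv_axis)
  also have "\<dots> \<le> norm (M *v axis j 1)" by (rule Finite_Cartesian_Product.norm_nth_le)
  also have "\<dots> \<le> sigma_max M * norm (axis j (1::complex) :: complex^'n)" by (rule sm_bound)
  finally show ?thesis by (simp add: norm_axis_c)
qed

definition nrm :: "complex^'n^'n \<Rightarrow> real" where
  "nrm M = (\<Sum>i\<in>UNIV. \<Sum>j\<in>UNIV. norm (M$i$j))"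

lemma mv_nrm: "norm ((M::complex^'n^'n) *v x) \<le> nrm M * norm x"
proof -
  have "norm (M *v x) \<le> (\<Sum>i\<in>UNIV. norm ((M *v x)$i))" by (simp add: norm_vec_def L2_set_le_sum)
  also have "\<dots> \<le> (\<Sum>i\<in>UNIV. \<Sum>j\<in>UNIV. norm (M$i$j) * norm x)"
  proof (intro sum_mono)
    fix i
    have "norm ((M *v x)$i) = norm (\<Sum>j\<in>UNIV. M$i$j * x$j)" by (simp add: matrix_vector_mult_def)
    also have "\<dots> \<le> (\<Sum>j\<in>UNIV. norm (M$i$j * x$j))" by (rule norm_sum)
    also have "\<dots> \<le> (\<Sum>j\<in>UNIV. norm (M$i$j) * norm x)"
      by (intro sum_mono) (simp add: norm_mult mult_left_mono Finite_Cartesian_Product.norm_nth_le)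
    finally show "norm ((M *v x)$i) \<le> (\<Sum>j\<in>UNIV. norm (M$i$j) * norm x)" .
  qed
  also have "\<dots> = nrm M * norm x" by (simp add: nrm_def sum_distrib_right)
  finally show ?thesis .
qed

lemma sm_le_nrm: "sigma_max (M::complex^'n^'n) \<le> nrm M"
proof -
  obtain x0 where "norm x0 = 1" "norm (M *v x0) = sigma_max M" by (rule sm_attain)
  then show ?thesis using mv_nrm[of M x0] by simp
qed

lemma sm_diff: "sigma_max (M::complex^'n^'n) \<le> sigma_max N + nrm (M - N)"
proof -
  obtain x0 where x0: "norm x0 = 1" "norm (M *v x0) = sigma_max M" by (rule sm_attain)
  have "M *v x0 = N *v x0 + (M - N) *v x0" by (simp add: matrix_vector_mult_diff_rdistrib)
  then have "norm (M *v x0) \<le> norm (N *v x0) + norm ((M - N) *v x0)" by (metis norm_triangle_ineq)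
  also have "\<dots> \<le> sigma_max N * 1 + nrm (M - N) * 1"
    using sm_bound[of N x0] mv_nrm[of "M - N" x0] x0(1) by (intro add_mono) auto
  finally show ?thesis using x0 by simp
qed

lemma nrm_le_norm: "nrm (M::complex^'n^'n) \<le> real (CARD('n) * CARD('n)) * norm M"
proof -
  have "nrm M \<le> (\<Sum>i\<in>(UNIV::'n set). \<Sum>j\<in>(UNIV::'n set). norm M)"
    unfolding nrm_def
    by (intro sum_mono) (meson Finite_Cartesian_Product.norm_nth_le order_trans)
  then show ?thesis by simp
qed

lemma sm_cont: "continuous_on UNIV (sigma_max :: complex^'n^'n \<Rightarrow> real)"
proof -
  define C where "C = real (CARD('n) * CARD('n))"
  have C0: "C > 0" by (simp add: C_def)
  have lip: "\<bar>sigma_max M - sigma_max N\<bar> \<le> C * dist M N" for M N :: "complex^'n^'n"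
  proof -
    have "sigma_max M - sigma_max N \<le> C * norm (M - N)"
      using sm_diff[of M N] nrm_le_norm[of "M - N"] by (simp add: C_def)
    moreover have "sigma_max N - sigma_max M \<le> C * norm (N - M)"
      using sm_diff[of N M] nrm_le_norm[of "N - M"] by (simp add: C_def)
    ultimately show ?thesis by (simp add: dist_norm norm_minus_commute abs_le_iff)
  qed
  show ?thesis
    unfolding continuous_on_iff
  proof (intro ballI allI impI)
    fix M :: "complex^'n^'n" and e :: real assume "e > 0"
    then show "\<exists>d>0. \<forall>N\<in>UNIV. dist N M < d \<longrightarrow> dist (sigma_max N) (sigma_max M) < e"
      using C0 lip
      by (intro exI[of _ "e / C"]) (auto simp: dist_real_def field_simps dist_commute intro: le_less_trans)
  qed
qed




lemma inv_props:
  fixes B :: "complex^'n^'n"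
  assumes "det B \<noteq> 0"
  shows "B ** matrix_inv B = mat 1" "matrix_inv B ** B = mat 1"
proof -
  have "invertible B" using assms invertible_det_nz by blast
  then have "B ** matrix_inv B = mat 1 \<and> matrix_inv B ** B = mat 1"
    unfolding matrix_inv_def invertible_def by (rule someI_ex)
  then show "B ** matrix_inv B = mat 1" "matrix_inv B ** B = mat 1" by auto
qed

lemma inv_apply: "det B \<noteq> 0 \<Longrightarrow> (B::complex^'n^'n) *v (matrix_inv B *v x) = x"
  by (simp add: matrix_vector_mul_assoc inv_props)

lemma inv_cramer:
  fixes B :: "complex^'n^'n"
  assumes "det B \<noteq> 0"
  shows "(matrix_inv B *v b)$k = det (\<chi> i j. if j = k then b$i else B$i$j) / det B"
proof -
  have "B *v (matrix_inv B *v b) = b" using assms by (rule inv_apply)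
  then have "matrix_inv B *v b = (\<chi> k. det(\<chi> i j. if j=k then b$i else B$i$j) / det B)"
    using cramer[OF assms] by blast
  then show ?thesis by simp
qed

lemma inv_lower:
  fixes B :: "complex^'n^'n"
  assumes "a > 0" "\<And>y. norm (B *v y) \<ge> a * norm y"
  shows "det B \<noteq> 0" "sigma_max (matrix_inv B) \<le> 1 / a"
proof -
  show d: "det B \<noteq> 0"
  proof
    assume "det B = 0"
    then obtain x where "x \<noteq> 0" "B *v x = 0" by (rule det0_kernel)
    then show False using assms(2)[of x] assms(1) by (simp add: mult_le_0_iff)
  qed
  obtain x0 where x0: "norm x0 = 1" "norm (matrix_inv B *v x0) = sigma_max (matrix_inv B)" by (rule sm_attain)
  have "a * norm (matrix_inv B *v x0) \<le> norm (B *v (matrix_inv B *v x0))" by (rule assms(2))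
  also have "\<dots> = 1" using inv_apply[OF d] x0(1) by simp
  finally show "sigma_max (matrix_inv B) \<le> 1 / a" using x0 assms(1) by (simp add: field_simps mult.commute)
qed

lemma hol_det:
  assumes "\<And>i j. (\<lambda>z. (M z :: complex^'n^'n) $ i $ j) holomorphic_on S"
  shows "(\<lambda>z. det (M z :: complex^'n^'n)) holomorphic_on S"
  unfolding det_def
  by (intro holomorphic_on_sum holomorphic_on_mult holomorphic_on_prod holomorphic_on_const assms)

locale dde =
  fixes m :: nat and A :: "nat \<Rightarrow> complex^'n^'n" and \<tau> w :: "nat \<Rightarrow> real"
  assumes tau0: "\<tau> 0 = 0" and taupos: "\<forall>i\<in>{1..m}. \<tau> i \<ge> 0" and wpos: "\<forall>i\<in>{0..m}. w i > 0"
begin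

lemma tau_nonneg: "i \<in> {0..m} \<Longrightarrow> \<tau> i \<ge> 0"
  using tau0 taupos by (cases "i = 0") auto

definition E :: "complex \<Rightarrow> complex^'n^'n" where
  "E z = (\<Sum>i\<in>{0..m}. (\<chi> r c. exp (- z * complex_of_real (\<tau> i)) * (A i $ r $ c)))"

lemma F_eq: "Fm m A \<tau> z = (\<chi> i j. if i = j then z else 0) - E z"
  by (simp add: Fm_def E_def)

lemma F_entry: "Fm m A \<tau> z $ i $ j = (if i = j then z else 0) - (\<Sum>k\<in>{0..m}. exp (- z * complex_of_real (\<tau> k)) * (A k $ i $ j))"
  by (simp add: Fm_def)

lemma Ev: "E z *v x = (\<Sum>i\<in>{0..m}. exp (- z * complex_of_real (\<tau> i)) *s (A i *v x))"
proof -
  have "(E z *v x) $ r = (\<Sum>i\<in>{0..m}. exp (- z * complex_of_real (\<tau> i)) *s (A i *v x)) $ r" for r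
  proof -
    have "(E z *v x) $ r = (\<Sum>c\<in>UNIV. (\<Sum>i\<in>{0..m}. exp (- z * complex_of_real (\<tau> i)) * (A i $ r $ c)) * x $ c)"
      by (simp add: E_def matrix_vector_mult_def)
    also have "\<dots> = (\<Sum>i\<in>{0..m}. \<Sum>c\<in>UNIV. exp (- z * complex_of_real (\<tau> i)) * (A i $ r $ c * x $ c))"
      by (subst sum.swap) (simp add: sum_distrib_right mult.assoc)
    also have "\<dots> = (\<Sum>i\<in>{0..m}. exp (- z * complex_of_real (\<tau> i)) *s (A i *v x)) $ r"
      by (simp add: matrix_vector_mult_def sum_distrib_left)
    finally show ?thesis .
  qed
  then show ?thesis by (simp add: vec_eq_iff)
qed

lemma Fv: "Fm m A \<tau> z *v x = z *s x - E z *v x"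
  by (simp add: F_eq matrix_vector_mult_diff_rdistrib mat_diag_mult)

definition Kc :: "real \<Rightarrow> real" where
  "Kc c = (\<Sum>i\<in>{0..m}. exp (- c * \<tau> i) * nrm (A i))"

lemma nrm_nonneg: "nrm M \<ge> 0"
  by (simp add: nrm_def sum_nonneg)

lemma Kc_nonneg: "Kc c \<ge> 0"
  by (simp add: Kc_def sum_nonneg nrm_nonneg)

lemma norm_exp_tau: "norm (exp (- z * complex_of_real t)) = exp (- Re z * t)"
  by simp

lemma E_bound:
  assumes "Re z \<ge> c"
  shows "norm (E z *v x) \<le> Kc c * norm x"
proof -
  have "norm (E z *v x) \<le> (\<Sum>i\<in>{0..m}. norm (exp (- z * complex_of_real (\<tau> i)) *s (A i *v x)))"
    unfolding Ev by (rule norm_sum)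
  also have "\<dots> \<le> (\<Sum>i\<in>{0..m}. exp (- c * \<tau> i) * nrm (A i) * norm x)"
  proof (intro sum_mono)
    fix i assume i: "i \<in> {0..m}"
    have "norm (exp (- z * complex_of_real (\<tau> i)) *s (A i *v x)) = exp (- Re z * \<tau> i) * norm (A i *v x)"
      by (simp add: norm_vec_def L2_set_def norm_mult power_mult_distrib sum_distrib_left[symmetric] real_sqrt_mult)
    also have "\<dots> \<le> exp (- c * \<tau> i) * (nrm (A i) * norm x)"
      using tau_nonneg[OF i] assms
      by (intro mult_mono mv_nrm) (auto simp: mult_right_mono)
    finally show "norm (exp (- z * complex_of_real (\<tau> i)) *s (A i *v x)) \<le> exp (- c * \<tau> i) * nrm (A i) * norm x"
      by (simp add: mult.assoc)
  qed
  also have "\<dots> = Kc c * norm x" by (simp add: Kc_def sum_distrib_right)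
  finally show ?thesis .
qed

lemma F_lower:
  assumes "Re z \<ge> c"
  shows "norm (Fm m A \<tau> z *v x) \<ge> (cmod z - Kc c) * norm x"
proof -
  have "norm (z *s x) = cmod z * norm x"
    by (simp add: norm_vec_def L2_set_def norm_mult power_mult_distrib sum_distrib_left[symmetric] real_sqrt_mult)
  then have "cmod z * norm x \<le> norm (Fm m A \<tau> z *v x) + norm (E z *v x)"
    unfolding Fv by (metis norm_triangle_ineq2 diff_le_eq)
  then show ?thesis using E_bound[OF assms, of x] by (simp add: left_diff_distrib)
qed

lemma root_bound:
  assumes "Re z \<ge> c" "det (Fm m A \<tau> z) = 0"
  shows "cmod z \<le> Kc c"
proof (rule ccontr)
  assume "\<not> cmod z \<le> Kc c"
  obtain x where "x \<noteq> 0" "Fm m A \<tau> z *v x = 0" using det0_kernel assms(2) by blast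
  then show False using F_lower[OF assms(1), of x] \<open>\<not> cmod z \<le> Kc c\<close> by (simp add: mult_le_0_iff)
qed

lemma inv_bound:
  assumes "Re z \<ge> c" "cmod z > Kc c"
  shows "det (Fm m A \<tau> z) \<noteq> 0" "sigma_max (matrix_inv (Fm m A \<tau> z)) \<le> 1 / (cmod z - Kc c)"
  using inv_lower[of "cmod z - Kc c" "Fm m A \<tau> z"] F_lower[OF assms(1)] assms(2) by auto

end




definition nperm :: "'n::finite itself \<Rightarrow> real" where
  "nperm _ = real (card {p. p permutes (UNIV::'n set)})"

lemma det_bound:
  fixes M :: "complex^'n^'n"
  assumes "\<And>i j. norm (M$i$j) \<le> B"
  shows "norm (det M) \<le> nperm TYPE('n) * B ^ CARD('n)"
proof -
  have "norm (det M) \<le> (\<Sum>p\<in>{p. p permutes (UNIV::'n set)}. norm (of_int (sign p) * (\<Prod>i\<in>UNIV. M$i$p i)))"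
    unfolding det_def by (rule norm_sum)
  also have "\<dots> \<le> (\<Sum>p\<in>{p. p permutes (UNIV::'n set)}. B ^ CARD('n))"
  proof (intro sum_mono)
    fix p :: "'n \<Rightarrow> 'n"
    have "sign p = 1 \<or> sign p = -1" by (simp add: sign_def)
    then have "norm (of_int (sign p) :: complex) = 1" by auto
    then have "norm (of_int (sign p) * (\<Prod>i\<in>UNIV. M$i$p i)) = (\<Prod>i\<in>UNIV. norm (M$i$p i))"
      by (simp only: norm_mult prod_norm)
    also have "\<dots> \<le> (\<Prod>i\<in>(UNIV::'n set). B)"
      by (intro prod_mono) (auto simp: assms)
    finally show "norm (of_int (sign p) * (\<Prod>i\<in>UNIV. M$i$p i)) \<le> B ^ CARD('n)" by simp
  qed
  also have "\<dots> = nperm TYPE('n) * B ^ CARD('n)" by (simp add: nperm_def)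
  finally show ?thesis .
qed

lemma nperm_ge1: "nperm TYPE('n::finite) \<ge> 1"
proof -
  have "finite {p. p permutes (UNIV::'n set)}" by (simp add: finite_permutations)
  moreover have "id \<in> {p. p permutes (UNIV::'n set)}" by (simp add: permutes_id)
  ultimately have "card {p. p permutes (UNIV::'n set)} \<ge> 1"
    by (metis One_nat_def Suc_leI card_gt_0_iff empty_iff)
  then show ?thesis by (simp add: nperm_def)
qed

lemma det_tendsto_I: "(det \<longlongrightarrow> 1) (at (mat 1 :: complex^'n^'n))"
proof -
  have "((\<lambda>M::complex^'n^'n. det M) \<longlongrightarrow> det (mat 1 :: complex^'n^'n)) (at (mat 1))"
    unfolding det_def
    by (intro tendsto_intros tendsto_vec_nth tendsto_ident_at)
  then show ?thesis by simp
qed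

lemma det_near_I:
  obtains d where "d > 0" "\<And>M::complex^'n^'n. norm (M - mat 1) < d \<Longrightarrow> norm (det M - 1) < 1/2"
proof -
  have "\<forall>\<^sub>F M in at (mat 1 :: complex^'n^'n). dist (det M) 1 < 1/2"
    using tendstoD[OF det_tendsto_I, of "1/2"] by simp
  then obtain d where d: "d > 0" "\<And>M::complex^'n^'n. M \<noteq> mat 1 \<Longrightarrow> dist M (mat 1) < d \<Longrightarrow> dist (det M) 1 < 1/2"
    unfolding eventually_at by blast
  show ?thesis
  proof (rule that[OF d(1)])
    fix M :: "complex^'n^'n" assume "norm (M - mat 1) < d"
    then show "norm (det M - 1) < 1/2"
      using d(2)[of M] by (cases "M = mat 1") (auto simp: dist_norm)
  qed
qed

lemma norm_l1: "norm (x::'a::real_normed_vector^'n) \<le> (\<Sum>i\<in>UNIV. norm (x$i))"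
proof -
  have "norm x = L2_set (\<lambda>i. norm (x$i)) UNIV" by (rule norm_vec_def)
  also have "\<dots> \<le> (\<Sum>i\<in>UNIV. norm (x$i))" by (rule L2_set_le_sum) simp
  finally show ?thesis .
qed

lemma norm_mat_le: "norm (M::complex^'n^'n) \<le> nrm M"
proof -
  have "norm M \<le> (\<Sum>i\<in>UNIV. norm (M$i))" by (rule norm_l1)
  also have "\<dots> \<le> (\<Sum>i\<in>UNIV. \<Sum>j\<in>UNIV. norm (M$i$j))"
    by (intro sum_mono norm_l1)
  finally show ?thesis by (simp add: nrm_def)
qed

lemma det_mat: "det (mat c :: complex^'n^'n) = c ^ CARD('n)"
  by (subst det_diagonal) (auto simp: mat_def)




lemma cmod_lt_2K:
  assumes "Re u < K" "K > 0"
  shows "cmod u < cmod (complex_of_real (2*K) - u)"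
proof -
  have "(cmod u)^2 = (Re u)^2 + (Im u)^2" by (simp add: cmod_power2)
  moreover have "(cmod (complex_of_real (2*K) - u))^2 = (2*K - Re u)^2 + (Im u)^2" by (simp add: cmod_power2)
  moreover have "(2*K - Re u)^2 - (Re u)^2 = 4*K*(K - Re u)" by (simp add: power2_eq_square algebra_simps)
  moreover have "4*K*(K - Re u) > 0" using assms by simp
  ultimately have "(cmod u)^2 < (cmod (complex_of_real (2*K) - u))^2" by linarith
  then show ?thesis by (rule power2_less_imp_less) simp
qed

lemma BC:
  fixes \<phi> :: "complex \<Rightarrow> complex"
  assumes hol: "\<phi> holomorphic_on UNIV" and a1: "a1 \<ge> 0"
    and bnd: "\<And>z. Re (\<phi> z) \<le> a0 + a1 * cmod z"
  shows "cmod (\<phi> z) \<le> (3 * cmod (\<phi> 0) + 2*a0 + 2*a1 + 2) + 4 * a1 * cmod z"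
proof -
  define R where "R = 2 * cmod z + 1"
  define K where "K = a0 + a1 * R + cmod (\<phi> 0) + 1"
  have R0: "R > 0" by (simp add: R_def add_nonneg_pos)
  have "Re (\<phi> 0) \<le> a0" using bnd[of 0] by simp
  moreover have "- cmod (\<phi> 0) \<le> Re (\<phi> 0)" using abs_Re_le_cmod[of "\<phi> 0"] by linarith
  moreover have "a1 * R \<ge> 0" using a1 R0 by simp
  ultimately have K1: "K \<ge> 1" by (simp add: K_def)
  define \<psi> where "\<psi> \<zeta> = \<phi> \<zeta> - \<phi> 0" for \<zeta>
  have ReK: "Re (\<psi> \<zeta>) < K" if "cmod \<zeta> < R" for \<zeta>
  proof -
    have "Re (\<psi> \<zeta>) = Re (\<phi> \<zeta>) - Re (\<phi> 0)" by (simp add: \<psi>_def)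
    also have "\<dots> \<le> a0 + a1 * cmod \<zeta> + cmod (\<phi> 0)"
      using bnd[of \<zeta>] abs_Re_le_cmod[of "\<phi> 0"] by linarith
    also have "\<dots> \<le> a0 + a1 * R + cmod (\<phi> 0)"
      using that a1 by (simp add: mult_left_mono)
    finally show ?thesis by (simp add: K_def)
  qed
  define h where "h t = \<psi> (of_real R * t) / (complex_of_real (2*K) - \<psi> (of_real R * t))" for t
  have den: "complex_of_real (2*K) - \<psi> (of_real R * t) \<noteq> 0" if "cmod t < 1" for t
  proof -
    have "cmod (of_real R * t) < R" using that R0 by (simp add: norm_mult)
    then have "Re (\<psi> (of_real R * t)) < K" by (rule ReK)
    then have pos: "Re (complex_of_real (2*K) - \<psi> (of_real R * t)) > 0" using K1 by simp
    show ?thesis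
    proof
      assume "complex_of_real (2*K) - \<psi> (of_real R * t) = 0"
      then have "Re (complex_of_real (2*K) - \<psi> (of_real R * t)) = 0" by simp
      then show False using pos by simp
    qed
  qed
  have holpsi: "(\<lambda>t. \<psi> (of_real R * t)) holomorphic_on UNIV"
  proof -
    have "(\<phi> \<circ> (\<lambda>t. of_real R * t)) holomorphic_on UNIV"
      by (rule holomorphic_on_compose) (auto intro: holomorphic_intros holomorphic_on_subset[OF hol])
    then show ?thesis unfolding \<psi>_def o_def by (intro holomorphic_intros) auto
  qed
  have holh: "h holomorphic_on ball 0 1"
  proof -
    have h1: "(\<lambda>t. \<psi> (of_real R * t)) holomorphic_on ball 0 1" using holpsi by (rule holomorphic_on_subset) simp
    have h2: "(\<lambda>t. complex_of_real (2*K) - \<psi> (of_real R * t)) holomorphic_on ball 0 1"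
      by (intro holomorphic_intros h1)
    have h3: "\<And>t. t \<in> ball 0 1 \<Longrightarrow> complex_of_real (2*K) - \<psi> (of_real R * t) \<noteq> 0" using den by simp
    show ?thesis unfolding h_def by (rule holomorphic_on_divide[OF h1 h2 h3])
  qed
  have h0: "h 0 = 0" by (simp add: h_def \<psi>_def)
  have hlt: "norm (h t) < 1" if "norm t < 1" for t
  proof -
    have "cmod (of_real R * t) < R" using that R0 by (simp add: norm_mult)
    then have "Re (\<psi> (of_real R * t)) < K" by (rule ReK)
    then have "cmod (\<psi> (of_real R * t)) < cmod (complex_of_real (2*K) - \<psi> (of_real R * t))"
      using K1 by (intro cmod_lt_2K) auto
    then show ?thesis using den[OF that[unfolded dist_norm]] by (simp add: h_def norm_divide divide_less_eq)
  qed
  have zR: "cmod z / R \<le> 1/2" using R0 by (simp add: R_def divide_le_eq)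
  have nz: "norm (complex_of_real (1/R) * z) = cmod z / R" using R0 by (simp add: norm_mult norm_divide)
  have "norm (complex_of_real (1/R) * z) < 1" using zR nz by linarith
  from Schwarz_Lemma(1)[OF holh h0 hlt this]
  have "cmod (h (complex_of_real (1/R) * z)) \<le> cmod z / R" using nz by simp
  moreover have "of_real R * (complex_of_real (1/R) * z) = z" using R0 by (simp add: field_simps)
  ultimately have "cmod (\<psi> z / (complex_of_real (2*K) - \<psi> z)) \<le> cmod z / R" by (simp add: h_def)
  moreover have dz: "complex_of_real (2*K) - \<psi> z \<noteq> 0"
  proof -
    have rz: "Re (\<psi> z) < K" using ReK[of z] R0 by (simp add: R_def)
    show ?thesis
    proof
      assume "complex_of_real (2*K) - \<psi> z = 0"
      then have "Re (complex_of_real (2*K) - \<psi> z) = 0" by simp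
      then show False using rz K1 by simp
    qed
  qed
  ultimately have "cmod (\<psi> z) \<le> cmod z / R * cmod (complex_of_real (2*K) - \<psi> z)"
    by (simp add: norm_divide divide_le_eq)
  also have "\<dots> \<le> 1/2 * (2*K + cmod (\<psi> z))"
  proof (rule mult_mono)
    show "cmod z / R \<le> 1/2" by (rule zR)
    have "cmod (complex_of_real (2*K) - \<psi> z) \<le> cmod (complex_of_real (2*K)) + cmod (\<psi> z)" by (rule norm_triangle_ineq4)
    then show "cmod (complex_of_real (2*K) - \<psi> z) \<le> 2*K + cmod (\<psi> z)" using K1 by simp
  qed auto
  finally have "cmod (\<psi> z) \<le> 2 * K" by simp
  moreover have "cmod (\<phi> z) \<le> cmod (\<psi> z) + cmod (\<phi> 0)"
    using norm_triangle_ineq[of "\<psi> z" "\<phi> 0"] by (simp add: \<psi>_def)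
  ultimately show ?thesis by (simp add: K_def R_def algebra_simps)
qed

lemma entire_linear:
  fixes \<phi> :: "complex \<Rightarrow> complex"
  assumes hol: "\<phi> holomorphic_on UNIV" and "c0 \<ge> 0" "c1 \<ge> 0"
    and bnd: "\<And>z. cmod (\<phi> z) \<le> c0 + c1 * cmod z"
  shows "\<exists>a b. \<forall>z. \<phi> z = b + a * z"
proof -
  have nof: "norm (\<phi> z) \<le> (c0 + c1) * norm z ^ 1" if "1 \<le> norm z" for z
  proof -
    have "c0 * 1 \<le> c0 * norm z" using mult_left_mono[OF that assms(2)] by simp
    then have "c0 + c1 * cmod z \<le> (c0 + c1) * norm z" by (simp add: distrib_right)
    then show ?thesis using bnd[of z] by simp
  qed
  have L: "\<phi> \<xi> = (\<Sum>k\<le>1. (deriv^^k) \<phi> 0 / fact k * \<xi> ^ k)" for \<xi>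
    by (rule Liouville_polynomial[OF hol nof])
  have s: "{..1::nat} = {0,1}" by auto
  have "\<phi> \<xi> = \<phi> 0 + deriv \<phi> 0 * \<xi>" for \<xi>
    using L[of \<xi>] unfolding s by simp
  then show ?thesis by blast
qed




lemma mat_mul_entry: "(mat c ** (N::complex^'n^'n)) $ i $ j = c * N $ i $ j"
proof -
  have "\<And>k. (if i = k then c else 0) * N$k$j = (if i = k then c * N$k$j else 0)" by simp
  then have "(mat c ** N) $ i $ j = (\<Sum>k\<in>UNIV. (if i = k then c * N$k$j else 0))"
    by (simp add: matrix_matrix_mult_def mat_def)
  then show ?thesis by simp
qed

context dde begin

lemma F_entry_hol: "(\<lambda>z. Fm m A \<tau> z $ i $ j) holomorphic_on S"
  unfolding F_entry by (cases "i = j") (auto intro!: holomorphic_intros)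

lemma detF_hol: "(\<lambda>z. det (Fm m A \<tau> z)) holomorphic_on S"
  by (rule hol_det) (rule F_entry_hol)

definition TT where "TT = (\<Sum>k\<in>{0..m}. \<tau> k)"
definition Na where "Na = (\<Sum>k\<in>{0..m}. nrm (A k))"

lemma TT_nonneg: "TT \<ge> 0" unfolding TT_def by (intro sum_nonneg) (simp add: tau_nonneg)
lemma Na_nonneg: "Na \<ge> 0" unfolding Na_def by (intro sum_nonneg) (simp add: nrm_nonneg)

lemma entry_le_nrm: "norm (M $ i $ j) \<le> nrm (M::complex^'n^'n)"
proof -
  have "norm (M $ i $ j) \<le> (\<Sum>j\<in>UNIV. norm (M $ i $ j))" by (rule member_le_sum) auto
  also have "\<dots> \<le> nrm M" unfolding nrm_def by (rule member_le_sum[of i]) (auto intro: sum_nonneg)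
  finally show ?thesis .
qed

lemma F_entry_bound: "norm (Fm m A \<tau> z $ i $ j) \<le> (1 + Na) * (1 + cmod z) * exp (TT * cmod z)"
proof -
  have "norm (Fm m A \<tau> z $ i $ j) \<le> norm (if i = j then z else 0) + norm (\<Sum>k\<in>{0..m}. exp (- z * complex_of_real (\<tau> k)) * (A k $ i $ j))"
    unfolding F_entry by (rule norm_triangle_ineq4)
  also have "\<dots> \<le> cmod z + (\<Sum>k\<in>{0..m}. exp (TT * cmod z) * nrm (A k))"
  proof (rule add_mono)
    show "norm (if i = j then z else 0) \<le> cmod z" by simp
    have "norm (\<Sum>k\<in>{0..m}. exp (- z * complex_of_real (\<tau> k)) * (A k $ i $ j)) \<le> (\<Sum>k\<in>{0..m}. norm (exp (- z * complex_of_real (\<tau> k)) * (A k $ i $ j)))"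
      by (rule norm_sum)
    also have "\<dots> \<le> (\<Sum>k\<in>{0..m}. exp (TT * cmod z) * nrm (A k))"
    proof (rule sum_mono)
      fix k assume k: "k \<in> {0..m}"
      have tk: "\<tau> k \<le> TT" unfolding TT_def by (rule member_le_sum) (use k tau_nonneg in auto)
      have "- Re z * \<tau> k \<le> cmod z * \<tau> k"
        using tau_nonneg[OF k] abs_Re_le_cmod[of z] by (intro mult_right_mono) auto
      also have "\<dots> \<le> TT * cmod z" using tk by (simp add: mult.commute mult_left_mono)
      finally have "exp (- Re z * \<tau> k) \<le> exp (TT * cmod z)" by simp
      then show "norm (exp (- z * complex_of_real (\<tau> k)) * (A k $ i $ j)) \<le> exp (TT * cmod z) * nrm (A k)"
        by (simp add: norm_mult) (intro mult_mono entry_le_nrm, auto)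
    qed
    finally show "norm (\<Sum>k\<in>{0..m}. exp (- z * complex_of_real (\<tau> k)) * (A k $ i $ j)) \<le> (\<Sum>k\<in>{0..m}. exp (TT * cmod z) * nrm (A k))" .
  qed
  also have "\<dots> = cmod z + exp (TT * cmod z) * Na" by (simp add: Na_def sum_distrib_left)
  also have "\<dots> \<le> (1 + Na) * (1 + cmod z) * exp (TT * cmod z)"
  proof -
    have e1: "exp (TT * cmod z) \<ge> 1" using TT_nonneg by simp
    have "(1 + cmod z) * 1 \<le> (1 + cmod z) * exp (TT * cmod z)"
      using e1 by (intro mult_left_mono) auto
    then have "cmod z \<le> (1 + cmod z) * exp (TT * cmod z)" by simp
    moreover have "exp (TT * cmod z) * Na \<le> Na * (1 + cmod z) * exp (TT * cmod z)"
    proof -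
      have "Na * 1 \<le> Na * (1 + cmod z)" using Na_nonneg by (intro mult_left_mono) auto
      then have "Na * exp (TT * cmod z) \<le> Na * (1 + cmod z) * exp (TT * cmod z)" by (intro mult_right_mono) auto
      then show ?thesis by (simp add: mult.commute)
    qed
    moreover have "(1 + Na) * (1 + cmod z) * exp (TT * cmod z) = (1 + cmod z) * exp (TT * cmod z) + Na * (1 + cmod z) * exp (TT * cmod z)"
      by (simp add: distrib_right)
    ultimately show ?thesis by linarith
  qed
  finally show ?thesis .
qed

definition a0 where "a0 = ln (nperm TYPE('n)) + real CARD('n) * ln (1 + Na)"
definition a1 where "a1 = real CARD('n) * (1 + TT)"

lemma a0_nonneg: "a0 \<ge> 0"
  unfolding a0_def using nperm_ge1[where 'n='n] Na_nonneg by (intro add_nonneg_nonneg mult_nonneg_nonneg) auto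

lemma a1_nonneg: "a1 \<ge> 0"
  unfolding a1_def using TT_nonneg by simp

lemma detF_growth: "norm (det (Fm m A \<tau> z)) \<le> exp (a0 + a1 * cmod z)"
proof -
  define n where "n = CARD('n)"
  have "norm (det (Fm m A \<tau> z)) \<le> nperm TYPE('n) * ((1 + Na) * (1 + cmod z) * exp (TT * cmod z)) ^ n"
    unfolding n_def by (rule det_bound) (rule F_entry_bound)
  also have "\<dots> = nperm TYPE('n) * (1 + Na)^n * (1 + cmod z)^n * exp (TT * cmod z)^n"
    by (simp add: power_mult_distrib)
  also have "\<dots> \<le> nperm TYPE('n) * (1 + Na)^n * exp (cmod z)^n * exp (TT * cmod z)^n"
  proof -
    have "(1 + cmod z)^n \<le> exp (cmod z)^n"
      by (intro power_mono) (auto simp: add.commute exp_ge_add_one_self)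
    moreover have "0 \<le> nperm TYPE('n) * (1 + Na)^n" using nperm_ge1[where 'n='n] Na_nonneg by simp
    ultimately show ?thesis by (intro mult_right_mono mult_left_mono) auto
  qed
  also have "\<dots> = exp (a0 + a1 * cmod z)"
  proof -
    have ep: "exp (ln (nperm TYPE('n))) = nperm TYPE('n)" using nperm_ge1[where 'n='n] by simp
    have en: "exp (ln (1 + Na)) = 1 + Na" using Na_nonneg by simp
    have "a0 + a1 * cmod z = ln (nperm TYPE('n)) + real n * ln (1 + Na) + real n * cmod z + real n * (TT * cmod z)"
      by (simp add: a0_def a1_def n_def algebra_simps)
    then have "exp (a0 + a1 * cmod z) = exp (ln (nperm TYPE('n))) * exp (ln (1 + Na))^n * exp (cmod z)^n * exp (TT * cmod z)^n"
      by (simp only: exp_add exp_of_nat_mult)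
    then show ?thesis using ep en by simp
  qed
  finally show ?thesis .
qed

end



context dde begin

lemma E_entry_bound:
  assumes "Re z \<ge> c"
  shows "norm (E z $ i $ j) \<le> Kc c"
proof -
  have "norm (E z $ i $ j) = norm ((E z *v axis j 1) $ i)" by (simp add: mv_axis)
  also have "\<dots> \<le> norm (E z *v axis j 1)" by (rule Finite_Cartesian_Product.norm_nth_le)
  also have "\<dots> \<le> Kc c * norm (axis j (1::complex) :: complex^'n)" by (rule E_bound[OF assms])
  finally show ?thesis by (simp add: norm_axis_c)
qed

definition Nmat :: "real \<Rightarrow> complex^'n^'n" where
  "Nmat x = (\<chi> i j. (mat 1 :: complex^'n^'n) $ i $ j - (E (complex_of_real x) :: complex^'n^'n) $ i $ j / complex_of_real x)"

lemma det_real_bounds: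
  obtains X where "X \<ge> 1" "\<And>x. x \<ge> X \<Longrightarrow> norm (det (Fm m A \<tau> (complex_of_real x))) \<ge> x ^ CARD('n) / 2"
     "\<And>x. x \<ge> X \<Longrightarrow> norm (det (Fm m A \<tau> (complex_of_real x))) \<le> 3/2 * x ^ CARD('n)"
proof -
  obtain d where d: "d > 0" "\<And>M::complex^'n^'n. norm (M - mat 1) < d \<Longrightarrow> norm (det M - 1) < 1/2"
    using det_near_I[where 'n='n] by metis
  define C where "C = real (CARD('n) * CARD('n))"
  define X where "X = C * (Kc 0 + 1) / d + 1"
  have C0: "C \<ge> 0" by (simp add: C_def)
  have X1: "X \<ge> 1" using C0 d(1) Kc_nonneg[of 0] by (simp add: X_def)
  have main: "norm (det (Fm m A \<tau> (complex_of_real x))) = x ^ CARD('n) * norm (det N) \<and> norm (det N - 1) < 1/2"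
    if x: "x \<ge> X" and N_def: "N = Nmat x" for x N
  proof
    have x0: "x > 0" using x X1 by simp
    have "Fm m A \<tau> (complex_of_real x) = mat (complex_of_real x) ** N"
      unfolding vec_eq_iff mat_mul_entry
      using x0 by (auto simp: N_def Nmat_def F_eq mat_def field_simps)
    then have "det (Fm m A \<tau> (complex_of_real x)) = complex_of_real x ^ CARD('n) * det N"
      by (simp add: det_mul det_mat)
    then show "norm (det (Fm m A \<tau> (complex_of_real x))) = x ^ CARD('n) * norm (det N)"
      using x0 by (simp add: norm_mult norm_power)
    have "norm (N - mat 1) \<le> nrm (N - mat 1)" by (rule norm_mat_le)
    also have "\<dots> \<le> (\<Sum>i\<in>(UNIV::'n set). \<Sum>j\<in>(UNIV::'n set). Kc 0 / x)"
      unfolding nrm_def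
    proof (intro sum_mono)
      fix i j :: 'n
      have "norm ((N - mat 1) $ i $ j) = norm (E (complex_of_real x) $ i $ j) / x"
        using x0 by (simp add: N_def Nmat_def norm_divide)
      also have "\<dots> \<le> Kc 0 / x" using E_entry_bound[of 0 "complex_of_real x" i j] x0
        by (intro divide_right_mono) auto
      finally show "norm ((N - mat 1) $ i $ j) \<le> Kc 0 / x" .
    qed
    also have "\<dots> = C * Kc 0 / x" by (simp add: C_def)
    also have "\<dots> < d"
    proof -
      have "C * Kc 0 \<le> C * (Kc 0 + 1)" using C0 by (simp add: mult_left_mono)
      also have "\<dots> < d * x"
      proof -
        have "C * (Kc 0 + 1) / d < x" using x by (simp add: X_def)
        then show ?thesis using d(1) by (simp add: divide_less_eq mult.commute)
      qed
      finally show ?thesis using x0 by (simp add: divide_less_eq)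
    qed
    finally show "norm (det N - 1) < 1/2" using d(2) by blast
  qed
  show ?thesis
  proof (rule that[OF X1])
    fix x assume x: "x \<ge> X"
    define N where "N = Nmat x"
    have m: "norm (det (Fm m A \<tau> (complex_of_real x))) = x ^ CARD('n) * norm (det N)" "norm (det N - 1) < 1/2"
      using main[OF x N_def] by auto
    have xn: "x ^ CARD('n) \<ge> 0" using x X1 by simp
    have "norm (det N) \<ge> 1/2" using m(2) norm_triangle_ineq2[of 1 "det N"] by (simp add: norm_minus_commute)
    then show "norm (det (Fm m A \<tau> (complex_of_real x))) \<ge> x ^ CARD('n) / 2"
      using m(1) xn mult_left_mono[of "1/2" "norm (det N)" "x ^ CARD('n)"] by simp
    have "norm (det N) \<le> 3/2" using m(2) norm_triangle_ineq[of "det N - 1" 1] by simp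
    then show "norm (det (Fm m A \<tau> (complex_of_real x))) \<le> 3/2 * x ^ CARD('n)"
      using m(1) xn mult_left_mono[of "norm (det N)" "3/2" "x ^ CARD('n)"] by (simp add: mult.commute)
  qed
qed


lemma roots_exist: "\<exists>z. det (Fm m A \<tau> z) = 0"
proof (rule ccontr)
  assume "\<not> (\<exists>z. det (Fm m A \<tau> z) = 0)"
  then have nz: "\<And>z. det (Fm m A \<tau> z) \<noteq> 0" by blast
  obtain \<phi> where hol: "\<phi> holomorphic_on UNIV" and ex: "\<And>z. exp (\<phi> z) = det (Fm m A \<tau> z)"
    using holomorphic_logarithm_exists[of UNIV "\<lambda>z. det (Fm m A \<tau> z)" 0] detF_hol nz by auto
  have reb: "Re (\<phi> z) \<le> a0 + a1 * cmod z" for z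
  proof -
    have "exp (Re (\<phi> z)) = norm (det (Fm m A \<tau> z))" using ex[of z] by (metis norm_exp_eq_Re)
    also have "\<dots> \<le> exp (a0 + a1 * cmod z)" by (rule detF_growth)
    finally show ?thesis by simp
  qed
  define c0 where "c0 = 3 * cmod (\<phi> 0) + 2*a0 + 2*a1 + 2"
  have c0: "c0 \<ge> 0" using a0_nonneg a1_nonneg by (simp add: c0_def)
  have "cmod (\<phi> z) \<le> c0 + 4 * a1 * cmod z" for z
    unfolding c0_def by (rule BC[OF hol a1_nonneg reb])
  then obtain a b where ab: "\<And>z. \<phi> z = b + a * z"
    using entire_linear[OF hol c0, of "4 * a1"] a1_nonneg by auto
  define \<alpha> where "\<alpha> = Re a"
  define \<beta> where "\<beta> = Re b"
  have ev: "norm (det (Fm m A \<tau> (complex_of_real x))) = exp (\<beta> + \<alpha> * x)" for x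
  proof -
    have "norm (det (Fm m A \<tau> (complex_of_real x))) = exp (Re (\<phi> (complex_of_real x)))"
      using ex by (metis norm_exp_eq_Re)
    also have "\<dots> = exp (\<beta> + \<alpha> * x)" by (simp add: ab \<alpha>_def \<beta>_def)
    finally show ?thesis .
  qed
  obtain X where X: "X \<ge> 1" "\<And>x. x \<ge> X \<Longrightarrow> norm (det (Fm m A \<tau> (complex_of_real x))) \<ge> x ^ CARD('n) / 2"
     "\<And>x. x \<ge> X \<Longrightarrow> norm (det (Fm m A \<tau> (complex_of_real x))) \<le> 3/2 * x ^ CARD('n)"
    using det_real_bounds by blast
  define n where "n = CARD('n)"
  have n1: "n \<ge> 1" by (simp add: n_def Suc_le_eq)
  define x where "x = max X (6 * 2^n * exp \<beta> + 1)"
  have x1: "x \<ge> X" "x \<ge> 1" using X(1) by (auto simp: x_def)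
  have x2: "2 * x \<ge> X" using x1 by simp
  have lo: "x ^ n / 2 \<le> exp (\<beta> + \<alpha> * x)" using X(2)[OF x1(1)] ev[of x] by (simp add: n_def)
  have hi: "exp (\<beta> + \<alpha> * (2*x)) \<le> 3/2 * (2*x) ^ n" using X(3)[OF x2] ev[of "2*x"] by (simp add: n_def)
  have "(x ^ n / 2)^2 \<le> (exp (\<beta> + \<alpha> * x))^2"
    using lo by (intro power_mono) (use x1 in auto)
  also have "\<dots> = exp \<beta> * exp (\<beta> + \<alpha> * (2*x))"
    by (simp add: power2_eq_square exp_add[symmetric] algebra_simps)
  also have "\<dots> \<le> exp \<beta> * (3/2 * (2*x) ^ n)" using hi by simp
  finally have ineq: "(x ^ n)^2 / 4 \<le> exp \<beta> * (3/2 * 2^n * x ^ n)"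
    by (simp add: power_divide power_mult_distrib mult.assoc)
  have xnpos: "x ^ n > 0" using x1 by simp
  have "(x ^ n)^2 / 4 = x^n * (x^n / 4)" by (simp add: power2_eq_square)
  moreover have "exp \<beta> * (3/2 * 2^n * x ^ n) = x^n * (exp \<beta> * 3/2 * 2^n)" by (simp add: algebra_simps)
  ultimately have "x^n * (x^n / 4) \<le> x^n * (exp \<beta> * 3/2 * 2^n)" using ineq by (simp only:)
  then have "x^n / 4 \<le> exp \<beta> * 3/2 * 2^n" using xnpos by simp
  then have "x^n \<le> 6 * 2^n * exp \<beta>" by (simp add: mult_ac)
  moreover have "x \<le> x ^ n" using x1 n1 by (metis power_increasing power_one_right)
  moreover have "x \<ge> 6 * 2^n * exp \<beta> + 1" by (simp add: x_def)
  ultimately show False by simp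
qed

end



context dde begin

abbreviation "FF \<equiv> Fm m A \<tau>"
abbreviation "a0' \<equiv> alpha0 m A \<tau>"

lemma detF_cont: "continuous_on UNIV (\<lambda>z. det (FF z))"
  using detF_hol holomorphic_on_imp_continuous_on by blast

lemma alpha0_props:
  shows "\<And>z. det (FF z) = 0 \<Longrightarrow> Re z \<le> a0'"
    and "\<exists>z0. det (FF z0) = 0 \<and> Re z0 = a0'"
proof -
  obtain z1 where z1: "det (FF z1) = 0" using roots_exist by blast
  define S where "S = {z. det (FF z) = 0} \<inter> {z. Re z1 \<le> Re z}"
  have "S \<subseteq> cball 0 (Kc (Re z1))"
    unfolding S_def using root_bound by auto
  then have "bounded S" using bounded_subset bounded_cball by blast
  moreover have "closed S" unfolding S_def
    by (intro closed_Int closed_Collect_eq detF_cont continuous_on_const closed_halfspace_Re_ge)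
  ultimately have "compact S" by (simp add: compact_eq_bounded_closed)
  moreover have "S \<noteq> {}" using z1 by (auto simp: S_def)
  ultimately obtain z0 where z0: "z0 \<in> S" "\<And>z. z \<in> S \<Longrightarrow> Re z \<le> Re z0"
    using continuous_attains_sup[of S Re] continuous_on_Re continuous_on_id by blast
  have all: "Re z \<le> Re z0" if "det (FF z) = 0" for z
  proof (cases "Re z1 \<le> Re z")
    case True then show ?thesis using z0(2) that by (auto simp: S_def)
  next
    case False then show ?thesis using z0(1) by (auto simp: S_def)
  qed
  have "a0' = Re z0"
    unfolding alpha0_def
    by (rule cSup_eq_maximum) (use z0(1) all in \<open>auto simp: S_def\<close>)
  then show "\<And>z. det (FF z) = 0 \<Longrightarrow> Re z \<le> a0'" "\<exists>z0. det (FF z0) = 0 \<and> Re z0 = a0'"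
    using all z0(1) by (auto simp: S_def)
qed

lemma det_nz_right: "Re z > a0' \<Longrightarrow> det (FF z) \<noteq> 0"
  using alpha0_props(1) by force

definition Wc :: "real \<Rightarrow> real" where
  "Wc c = (\<Sum>i\<in>{0..m}. exp (- c * \<tau> i) / w i)"

lemma wfun_eq: "wfun m \<tau> w z = (\<Sum>i\<in>{0..m}. exp (- Re z * \<tau> i) / w i)"
  by (simp add: wfun_def)

lemma wfun_pos: "wfun m \<tau> w z > 0"
proof -
  have w0: "w 0 > 0" using wpos by auto
  have "exp (- Re z * \<tau> 0) / w 0 \<le> (\<Sum>i\<in>{0..m}. exp (- Re z * \<tau> i) / w i)"
    by (rule member_le_sum) (use wpos in \<open>auto intro: divide_nonneg_pos less_imp_le\<close>)
  moreover have "exp (- Re z * \<tau> 0) / w 0 > 0" using w0 by simp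
  ultimately show ?thesis by (simp add: wfun_eq)
qed

lemma wfun_mono: "Re z1 \<le> Re z2 \<Longrightarrow> wfun m \<tau> w z2 \<le> wfun m \<tau> w z1"
  unfolding wfun_eq
  by (intro sum_mono divide_right_mono) (use wpos tau_nonneg in \<open>auto intro: mult_right_mono less_imp_le\<close>)

lemma wfun_bound: "Re z \<ge> c \<Longrightarrow> wfun m \<tau> w z \<le> Wc c"
  unfolding wfun_eq Wc_def
  by (intro sum_mono divide_right_mono) (use wpos tau_nonneg in \<open>auto intro: mult_right_mono less_imp_le\<close>)

lemma wfun_cont: "continuous_on UNIV (wfun m \<tau> w)"
  unfolding wfun_eq[abs_def] by (intro continuous_intros) (use wpos in force)

definition Dset where "Dset = {z. det (FF z) \<noteq> 0}"

lemma open_Dset: "open Dset"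
  unfolding Dset_def by (intro open_Collect_neq detF_cont continuous_on_const)

lemma inv_entry_eq:
  assumes "det (FF z) \<noteq> 0"
  shows "matrix_inv (FF z) $ j $ k = det (\<chi> i l. if l = j then (axis k 1 :: complex^'n) $ i else FF z $ i $ l) / det (FF z)"
proof -
  have "matrix_inv (FF z) $ j $ k = (matrix_inv (FF z) *v axis k 1) $ j" by (simp add: mv_axis)
  also have "\<dots> = det (\<chi> i l. if l = j then (axis k 1 :: complex^'n) $ i else FF z $ i $ l) / det (FF z)"
    by (rule inv_cramer[OF assms])
  finally show ?thesis .
qed

lemma cram_hol: "(\<lambda>z. det (\<chi> i l. if l = j then (b :: complex^'n) $ i else FF z $ i $ l) / det (FF z)) holomorphic_on Dset"
proof (intro holomorphic_on_divide detF_hol)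
  show "(\<lambda>z. det (\<chi> i l. if l = j then b $ i else FF z $ i $ l)) holomorphic_on Dset"
  proof (rule hol_det)
    fix i l show "(\<lambda>z. (\<chi> i l. if l = j then b $ i else FF z $ i $ l) $ i $ l) holomorphic_on Dset"
      by (cases "l = j") (auto intro: F_entry_hol)
  qed
  show "\<And>z. z \<in> Dset \<Longrightarrow> det (FF z) \<noteq> 0" by (simp add: Dset_def)
qed

lemma inv_cont: "continuous_on Dset (\<lambda>z. matrix_inv (FF z))"
proof -
  have "continuous_on Dset (\<lambda>z. (\<chi> j k. det (\<chi> i l. if l = j then (axis k 1 :: complex^'n) $ i else FF z $ i $ l) / det (FF z)) :: complex^'n^'n)"
    by (intro continuous_on_vec_lambda holomorphic_on_imp_continuous_on cram_hol)
  moreover have "\<And>z. z \<in> Dset \<Longrightarrow> (\<chi> j k. det (\<chi> i l. if l = j then (axis k 1 :: complex^'n) $ i else FF z $ i $ l) / det (FF z)) = matrix_inv (FF z)"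
    by (simp add: vec_eq_iff inv_entry_eq Dset_def)
  ultimately show ?thesis using continuous_on_cong by force
qed

lemma s_cont: "continuous_on Dset (\<lambda>z. sigma_max (matrix_inv (FF z)))"
  by (rule continuous_on_compose2[OF sm_cont inv_cont]) auto

lemma f_eq: "ffun m A \<tau> w z = wfun m \<tau> w z * sigma_max (matrix_inv (FF z))"
  by (simp add: ffun_def)

lemma f_cont: "continuous_on Dset (ffun m A \<tau> w)"
  unfolding f_eq[abs_def]
  by (intro continuous_intros s_cont continuous_on_subset[OF wfun_cont]) auto

lemma s_pos:
  assumes "det (FF z) \<noteq> 0"
  shows "sigma_max (matrix_inv (FF z)) > 0"
proof (rule ccontr)
  assume "\<not> ?thesis"
  then have s0: "sigma_max (matrix_inv (FF z)) = 0" using sm_nonneg[of "matrix_inv (FF z)"] by simp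
  obtain k :: 'n where True by blast
  have "norm (matrix_inv (FF z) *v axis k 1) \<le> 0" using sm_bound[of "matrix_inv (FF z)" "axis k 1"] s0 by simp
  then have "matrix_inv (FF z) *v axis k 1 = 0" by simp
  then have "FF z *v (matrix_inv (FF z) *v axis k 1) = 0" by simp
  then have "(axis k (1::complex) :: complex^'n) = 0" using inv_apply[OF assms] by simp
  then show False by (simp add: axis_eq_0_iff)
qed

lemma f_pos: "det (FF z) \<noteq> 0 \<Longrightarrow> ffun m A \<tau> w z > 0"
  using f_eq wfun_pos s_pos by simp

lemma f_decay:
  assumes "Re z \<ge> c" "cmod z > Kc c"
  shows "ffun m A \<tau> w z \<le> Wc c / (cmod z - Kc c)"
proof -
  have "ffun m A \<tau> w z = wfun m \<tau> w z * sigma_max (matrix_inv (FF z))" by (rule f_eq)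
  also have "\<dots> \<le> Wc c * (1 / (cmod z - Kc c))"
  proof -
    have "Wc c \<ge> 0" using wfun_pos[of z] wfun_bound[OF assms(1)] by linarith
    then show ?thesis using wfun_bound[OF assms(1)] inv_bound[OF assms] sm_nonneg
      by (intro mult_mono) auto
  qed
  finally show ?thesis by simp
qed

end



lemma Complex_eq': "Complex s t = complex_of_real s + \<i> * complex_of_real t"
  by (simp add: complex_eq_iff)

lemma cont_Complex: "continuous_on UNIV (\<lambda>t. Complex s t)"
  unfolding Complex_eq' by (intro continuous_intros)

lemma cmod_Complex_ge: "cmod (Complex s t) \<ge> \<bar>t\<bar>"
  using abs_Im_le_cmod[of "Complex s t"] by simp

context dde begin

abbreviation "ff \<equiv> ffun m A \<tau> w"

lemma in_Dset: "Re z > a0' \<Longrightarrow> z \<in> Dset"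
  using det_nz_right by (simp add: Dset_def)

lemma Wc_pos: "Wc c > 0"
  using wfun_pos[of "complex_of_real c"] wfun_bound[of c "complex_of_real c"] by simp

lemma af_max:
  assumes "\<sigma> > a0'"
  obtains \<omega>0 where "\<And>\<omega>. ff (Complex \<sigma> \<omega>) \<le> ff (Complex \<sigma> \<omega>0)" "alpha_f m A \<tau> w \<sigma> = ff (Complex \<sigma> \<omega>0)"
proof -
  define g where "g \<omega> = ff (Complex \<sigma> \<omega>)" for \<omega>
  have inD: "Complex \<sigma> \<omega> \<in> Dset" for \<omega> using assms by (intro in_Dset) simp
  have gcont: "continuous_on UNIV g"
    unfolding g_def by (rule continuous_on_compose2[OF f_cont cont_Complex]) (auto simp: inD)
  define v0 where "v0 = g 0"
  have v0: "v0 > 0" unfolding v0_def g_def using inD[of 0] by (intro f_pos) (simp add: Dset_def)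
  define R where "R = Kc \<sigma> + Wc \<sigma> / v0 + 1"
  have R0: "R > 0" using Kc_nonneg[of \<sigma>] Wc_pos[of \<sigma>] v0 by (simp add: R_def add_nonneg_pos)
  have far: "g \<omega> < v0" if "\<bar>\<omega>\<bar> > R" for \<omega>
  proof -
    have c: "cmod (Complex \<sigma> \<omega>) > R" using cmod_Complex_ge[where s=\<sigma> and t=\<omega>] that by simp
    have c2: "cmod (Complex \<sigma> \<omega>) > Kc \<sigma>" using c R_def Wc_pos[of \<sigma>] v0 divide_pos_pos[of "Wc \<sigma>" v0] by linarith
    have "g \<omega> \<le> Wc \<sigma> / (cmod (Complex \<sigma> \<omega>) - Kc \<sigma>)" unfolding g_def by (rule f_decay) (use c2 in auto)
    also have "\<dots> \<le> Wc \<sigma> / (Wc \<sigma> / v0 + 1)"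
    proof (rule divide_left_mono)
      show "Wc \<sigma> / v0 + 1 \<le> cmod (Complex \<sigma> \<omega>) - Kc \<sigma>" using c by (simp add: R_def)
      show "0 \<le> Wc \<sigma>" using Wc_pos[of \<sigma>] by simp
      have "Wc \<sigma> / v0 + 1 > 0" using Wc_pos[of \<sigma>] v0 by (simp add: add_pos_pos)
      moreover have "cmod (Complex \<sigma> \<omega>) - Kc \<sigma> > 0" using c2 by simp
      ultimately show "0 < (cmod (Complex \<sigma> \<omega>) - Kc \<sigma>) * (Wc \<sigma> / v0 + 1)" by (simp only: mult_pos_pos)
    qed
    also have "\<dots> < v0"
    proof -
      have "Wc \<sigma> < v0 * (Wc \<sigma> / v0 + 1)" using v0 by (simp add: distrib_left)
      then show ?thesis using v0 Wc_pos[of \<sigma>] by (simp add: divide_less_eq add_pos_pos mult.commute)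
    qed
    finally show ?thesis .
  qed
  have "compact {-R..R}" by simp
  moreover have "{-R..R} \<noteq> {}" using R0 by simp
  moreover have "continuous_on {-R..R} g" using gcont by (rule continuous_on_subset) simp
  ultimately have "\<exists>x\<in>{-R..R}. \<forall>y\<in>{-R..R}. g y \<le> g x" by (rule continuous_attains_sup)
  then obtain \<omega>1 where \<omega>1: "\<omega>1 \<in> {-R..R}" "\<And>y. y \<in> {-R..R} \<Longrightarrow> g y \<le> g \<omega>1"
    by blast
  have mx: "g \<omega> \<le> g \<omega>1" for \<omega>
  proof (cases "\<bar>\<omega>\<bar> \<le> R")
    case True then show ?thesis using \<omega>1(2)[of \<omega>] by (simp add: abs_le_iff)
  next
    case False
    then have "g \<omega> < v0" using far by simp
    also have "v0 \<le> g \<omega>1" unfolding v0_def using \<omega>1(2)[of 0] R0 by simp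
    finally show ?thesis by simp
  qed
  show ?thesis
  proof (rule that)
    show "\<And>\<omega>. ff (Complex \<sigma> \<omega>) \<le> ff (Complex \<sigma> \<omega>1)" using mx by (simp add: g_def)
    show "alpha_f m A \<tau> w \<sigma> = ff (Complex \<sigma> \<omega>1)"
      unfolding alpha_f_def
    proof (rule cSup_eq_maximum)
      show "ff (Complex \<sigma> \<omega>1) \<in> range (\<lambda>\<omega>. ff (Complex \<sigma> \<omega>))" by (rule rangeI)
      fix x assume "x \<in> range (\<lambda>\<omega>. ff (Complex \<sigma> \<omega>))"
      then obtain \<omega> where "x = ff (Complex \<sigma> \<omega>)" by blast
      then show "x \<le> ff (Complex \<sigma> \<omega>1)" using mx[of \<omega>] by (simp add: g_def)
    qed
  qed
qed

lemma af_upper: "\<sigma> > a0' \<Longrightarrow> ff (Complex \<sigma> \<omega>) \<le> alpha_f m A \<tau> w \<sigma>"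
  by (metis af_max)

end



lemma cs_ineq: "norm (\<Sum>j\<in>UNIV. cnj (v $ j) * (a::complex^'n) $ j) \<le> norm v * norm a"
proof -
  have "norm (\<Sum>j\<in>UNIV. cnj (v $ j) * a $ j) \<le> (\<Sum>j\<in>UNIV. norm (cnj (v $ j) * a $ j))" by (rule norm_sum)
  also have "\<dots> = (\<Sum>j\<in>UNIV. \<bar>norm (v $ j)\<bar> * \<bar>norm (a $ j)\<bar>)" by (simp add: norm_mult)
  also have "\<dots> \<le> L2_set (\<lambda>j. norm (v $ j)) UNIV * L2_set (\<lambda>j. norm (a $ j)) UNIV" by (rule L2_set_mult_ineq)
  also have "\<dots> = norm v * norm a" by (simp add: norm_vec_def)
  finally show ?thesis .
qed

lemma cs_self: "(\<Sum>j\<in>UNIV. cnj (v $ j) * (v::complex^'n) $ j) = complex_of_real ((norm v)^2)"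
proof -
  have "(\<Sum>j\<in>UNIV. cnj (v $ j) * v $ j) = (\<Sum>j\<in>UNIV. complex_of_real ((norm (v $ j))^2))"
    by (intro sum.cong refl) (metis complex_norm_square mult.commute of_real_power)
  also have "\<dots> = complex_of_real (\<Sum>j\<in>UNIV. (norm (v $ j))^2)" by simp
  also have "\<dots> = complex_of_real ((norm v)^2)" by (simp add: norm_vec_def L2_set_def sum_nonneg)
  finally show ?thesis .
qed

lemma scaleR_comp: "(c *\<^sub>R (x::complex^'n)) $ j = complex_of_real c * x $ j"
proof -
  have "(c *\<^sub>R x) $ j = c *\<^sub>R x $ j" by simp
  also have "\<dots> = complex_of_real c * x $ j" by (rule scaleR_conv_of_real)
  finally show ?thesis .
qed

context dde begin

lemma af_strict:
  assumes s1: "a0' < \<sigma>1" and s12: "\<sigma>1 < \<sigma>2"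
  shows "alpha_f m A \<tau> w \<sigma>2 < alpha_f m A \<tau> w \<sigma>1"
proof -
  have s2: "a0' < \<sigma>2" using s1 s12 by simp
  obtain \<omega>2 where \<omega>2: "\<And>\<omega>. ff (Complex \<sigma>2 \<omega>) \<le> ff (Complex \<sigma>2 \<omega>2)" "alpha_f m A \<tau> w \<sigma>2 = ff (Complex \<sigma>2 \<omega>2)"
    using af_max[OF s2] by blast
  define l2 where "l2 = Complex \<sigma>2 \<omega>2"
  have dl2: "det (FF l2) \<noteq> 0" using det_nz_right s2 by (simp add: l2_def)
  define M2 where "M2 = matrix_inv (FF l2)"
  define s2v where "s2v = sigma_max M2"
  have s2pos: "s2v > 0" unfolding s2v_def M2_def by (rule s_pos[OF dl2])
  obtain u where u: "norm u = 1" "norm (M2 *v u) = s2v" unfolding s2v_def by (rule sm_attain)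
  define v where "v = (1 / s2v) *\<^sub>R (M2 *v u)"
  have nv: "norm v = 1" using u s2pos by (simp add: v_def)
  have M2u: "M2 *v u = s2v *\<^sub>R v" using s2pos by (simp add: v_def)
  define g where "g z = (\<Sum>j\<in>UNIV. cnj (v $ j) * (det (\<chi> i l. if l = j then u $ i else FF z $ i $ l) / det (FF z)))" for z
  have g_eq: "g z = (\<Sum>j\<in>UNIV. cnj (v $ j) * (matrix_inv (FF z) *v u) $ j)" if "z \<in> Dset" for z
    using that by (simp add: g_def inv_cramer Dset_def)
  have g_hol: "g holomorphic_on Dset"
    unfolding g_def by (intro holomorphic_on_sum holomorphic_on_mult holomorphic_on_const cram_hol)
  have g_bound: "norm (g z) \<le> sigma_max (matrix_inv (FF z))" if "z \<in> Dset" for z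
  proof -
    have "norm (g z) \<le> norm v * norm (matrix_inv (FF z) *v u)" unfolding g_eq[OF that] by (rule cs_ineq)
    also have "\<dots> \<le> 1 * (sigma_max (matrix_inv (FF z)) * 1)" using nv u(1) sm_bound[of "matrix_inv (FF z)" u] by simp
    finally show ?thesis by simp
  qed
  have gl2: "g l2 = complex_of_real s2v"
  proof -
    have "l2 \<in> Dset" using dl2 by (simp add: Dset_def)
    then have "g l2 = (\<Sum>j\<in>UNIV. cnj (v $ j) * (s2v *\<^sub>R v) $ j)" using g_eq M2u by (simp add: M2_def)
    also have "\<dots> = complex_of_real s2v * (\<Sum>j\<in>UNIV. cnj (v $ j) * v $ j)"
      by (simp only: scaleR_comp sum_distrib_left) (simp add: mult_ac)
    also have "\<dots> = complex_of_real s2v" using nv by (simp add: cs_self)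
    finally show ?thesis .
  qed
  have "\<exists>\<omega>. norm (g (Complex \<sigma>1 \<omega>)) > s2v"
  proof (rule ccontr)
    assume "\<not> ?thesis"
    then have left: "norm (g (Complex \<sigma>1 \<omega>)) \<le> s2v" for \<omega> by (simp add: not_less)
    define K where "K = Kc \<sigma>1"
    have K0: "K \<ge> 0" by (simp add: K_def Kc_nonneg)
    define R where "R = 2 * (K + 2 / s2v + cmod l2 + \<bar>\<sigma>1\<bar> + 1)"
    have R_ge: "R / 2 \<ge> K + 2 / s2v + 1" "R / 2 > cmod l2" "R / 2 \<ge> \<bar>\<sigma>1\<bar> + 1"
    proof -
      have p: "2 / s2v > 0" using s2pos by simp
      have h: "R / 2 = K + 2 / s2v + cmod l2 + \<bar>\<sigma>1\<bar> + 1" by (simp add: R_def)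
      show "R / 2 \<ge> K + 2 / s2v + 1" "R / 2 > cmod l2" "R / 2 \<ge> \<bar>\<sigma>1\<bar> + 1"
        using h p K0 norm_ge_zero[of l2] abs_ge_zero[of \<sigma>1] by linarith+
    qed
    have decay: "norm (g z) < s2v / 2" if "Re z \<ge> \<sigma>1" "cmod z \<ge> R / 2" for z
    proof -
      have zK: "cmod z > K" using that R_ge s2pos by (smt (verit) divide_pos_pos)
      have zD: "z \<in> Dset" using that s1 by (intro in_Dset) simp
      have "norm (g z) \<le> sigma_max (matrix_inv (FF z))" by (rule g_bound[OF zD])
      also have "\<dots> \<le> 1 / (cmod z - K)" using inv_bound[OF that(1) zK[unfolded K_def]] by (simp add: K_def)
      also have "\<dots> \<le> 1 / (2 / s2v + 1)"
      proof (rule divide_left_mono)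
        show "2 / s2v + 1 \<le> cmod z - K" using that R_ge by linarith
        have "2 / s2v + 1 > 0" using s2pos by (simp add: add_pos_pos)
        moreover have "cmod z - K > 0" using zK by simp
        ultimately show "0 < (cmod z - K) * (2 / s2v + 1)" by (simp only: mult_pos_pos)
      qed simp
      also have "\<dots> < s2v / 2"
      proof -
        have "2 < s2v * (2 / s2v + 1)" using s2pos by (simp add: distrib_left)
        then show ?thesis using s2pos by (simp add: divide_less_eq field_simps)
      qed
      finally show ?thesis .
    qed
    define U where "U = {z. \<sigma>1 < Re z} \<inter> ball 0 R"
    have openU: "open U" unfolding U_def by (intro open_Int open_halfspace_Re_gt open_ball)
    have convU: "convex U" unfolding U_def by (intro convex_Int convex_halfspace_Re_gt convex_ball)
    have bU: "bounded U" unfolding U_def by (intro bounded_Int) auto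
    have l2U: "l2 \<in> U" using s12 R_ge by (simp add: U_def l2_def)
    have clU: "closure U \<subseteq> {z. \<sigma>1 \<le> Re z} \<inter> cball 0 R"
      unfolding U_def by (intro closure_minimal) (auto intro: closed_Int closed_halfspace_Re_ge)
    have clD: "closure U \<subseteq> Dset" using clU s1 in_Dset by force
    have holU: "g holomorphic_on U" using g_hol clD closure_subset by (blast intro: holomorphic_on_subset)
    have contU: "continuous_on (closure U) g"
      using holomorphic_on_imp_continuous_on[OF g_hol] clD by (rule continuous_on_subset)
    have fr: "norm (g z) \<le> s2v" if "z \<in> frontier U" for z
    proof -
      have zc: "z \<in> closure U" and zn: "z \<notin> U"
        using that openU by (auto simp: frontier_def interior_open)
      have zr: "\<sigma>1 \<le> Re z" "cmod z \<le> R" using zc clU by auto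
      show ?thesis
      proof (cases "Re z = \<sigma>1")
        case True
        then have "z = Complex \<sigma>1 (Im z)" by (simp add: complex_eq_iff)
        then show ?thesis using left[of "Im z"] by simp
      next
        case False
        then have "cmod z \<ge> R" using zn zr by (auto simp: U_def)
        then have "cmod z \<ge> R / 2" using R_ge by simp
        then show ?thesis using decay[OF zr(1)] s2pos by fastforce
      qed
    qed
    have le: "norm (g z) \<le> norm (g l2)" if "z \<in> U" for z
    proof -
      have "norm (g z) \<le> s2v"
        using maximum_modulus_frontier[of g U s2v z] holU contU bU fr that openU
        by (simp add: interior_open)
      then show ?thesis using gl2 s2pos by simp
    qed
    have "g constant_on U"
      by (rule maximum_modulus_principle[OF holU openU convex_connected[OF convU] openU order_refl l2U le])
    then obtain c where c: "\<And>z. z \<in> U \<Longrightarrow> g z = c" unfolding constant_on_def by blast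
    define zs where "zs = complex_of_real (3 * R / 4)"
    have R0: "R > 0" using R_ge by simp
    have zsU: "zs \<in> U" using R_ge R0 by (simp add: U_def zs_def)
    have "norm (g zs) < s2v / 2" using R_ge R0 by (intro decay) (auto simp: zs_def)
    moreover have "g zs = g l2" using c[OF zsU] c[OF l2U] by simp
    ultimately show False using gl2 s2pos by simp
  qed
  then obtain \<omega> where om: "norm (g (Complex \<sigma>1 \<omega>)) > s2v" by blast
  define z1 where "z1 = Complex \<sigma>1 \<omega>"
  have z1D: "z1 \<in> Dset" using s1 by (intro in_Dset) (simp add: z1_def)
  have "alpha_f m A \<tau> w \<sigma>2 = wfun m \<tau> w l2 * s2v"
    using \<omega>2(2) by (simp add: f_eq l2_def s2v_def M2_def)
  also have "\<dots> \<le> wfun m \<tau> w z1 * s2v"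
    using s2pos s12 by (intro mult_right_mono wfun_mono) (auto simp: l2_def z1_def)
  also have "\<dots> < wfun m \<tau> w z1 * norm (g z1)"
    using om wfun_pos by (simp add: z1_def)
  also have "\<dots> \<le> wfun m \<tau> w z1 * sigma_max (matrix_inv (FF z1))"
    using g_bound[OF z1D] wfun_pos by (intro mult_left_mono) (auto intro: less_imp_le)
  also have "\<dots> = ff z1" by (simp add: f_eq)
  also have "\<dots> \<le> alpha_f m A \<tau> w \<sigma>1" unfolding z1_def by (rule af_upper[OF s1])
  finally show ?thesis .
qed

end



context dde begin

lemma wfun_ge: "wfun m \<tau> w z \<ge> 1 / w 0"
proof -
  have "exp (- Re z * \<tau> 0) / w 0 \<le> (\<Sum>i\<in>{0..m}. exp (- Re z * \<tau> i) / w i)"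
    by (rule member_le_sum) (use wpos in \<open>auto intro: divide_nonneg_pos less_imp_le\<close>)
  then show ?thesis by (simp add: wfun_eq tau0)
qed

lemma large_near_root:
  assumes T: "T > 0"
  obtains z1 where "Re z1 > a0'" "ff z1 \<ge> T"
proof -
  obtain z0 where z0: "det (FF z0) = 0" "Re z0 = a0'" using alpha0_props(2) by blast
  have w0: "w 0 > 0" using wpos by auto
  define B where "B = T * w 0"
  have B0: "B > 0" using T w0 by (simp add: B_def)
  define P where "P = nperm TYPE('n)"
  have P1: "P \<ge> 1" unfolding P_def by (rule nperm_ge1)
  define \<eta> where "\<eta> = 1 / (P * B ^ CARD('n))"
  have \<eta>0: "\<eta> > 0" using P1 B0 by (simp add: \<eta>_def)
  obtain d where d: "d > 0" "\<And>z. dist z z0 < d \<Longrightarrow> dist (det (FF z)) (det (FF z0)) < \<eta>"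
    using detF_cont \<eta>0 unfolding continuous_on_iff by blast
  define z1 where "z1 = z0 + complex_of_real (d/2)"
  have dz1: "dist z1 z0 < d" using d(1) by (simp add: z1_def dist_norm)
  have small: "norm (det (FF z1)) < \<eta>" using d(2)[OF dz1] z0(1) by (simp add: dist_norm)
  have rz1: "Re z1 > a0'" using z0(2) d(1) by (simp add: z1_def)
  have nz: "det (FF z1) \<noteq> 0" using det_nz_right[OF rz1] .
  define Mi where "Mi = matrix_inv (FF z1)"
  have sB: "sigma_max Mi \<ge> B"
  proof (rule ccontr)
    assume "\<not> ?thesis"
    then have lt: "sigma_max Mi < B" by simp
    have "norm (det Mi) \<le> P * (sigma_max Mi) ^ CARD('n)"
      unfolding P_def by (rule det_bound) (rule sm_entry)
    also have "\<dots> \<le> P * B ^ CARD('n)"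
      using lt sm_nonneg[of Mi] P1 by (intro mult_left_mono power_mono) auto
    finally have dMi: "norm (det Mi) \<le> P * B ^ CARD('n)" .
    have "det (FF z1) * det Mi = 1"
      using inv_props(1)[OF nz] det_mul[of "FF z1" Mi] by (simp add: Mi_def)
    then have "norm (det (FF z1)) * norm (det Mi) = 1" by (metis norm_mult norm_one)
    then have "1 \<le> norm (det (FF z1)) * (P * B ^ CARD('n))"
      using dMi by (metis mult_left_mono norm_ge_zero)
    moreover have "norm (det (FF z1)) * (P * B ^ CARD('n)) < \<eta> * (P * B ^ CARD('n))"
      using small P1 B0 by (intro mult_strict_right_mono) auto
    moreover have "\<eta> * (P * B ^ CARD('n)) = 1" using P1 B0 by (simp add: \<eta>_def)
    ultimately show False by simp
  qed
  have "T = (1 / w 0) * B" using w0 by (simp add: B_def)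
  also have "\<dots> \<le> wfun m \<tau> w z1 * sigma_max Mi"
    using wfun_ge[of z1] sB B0 w0 wfun_pos[of z1] by (intro mult_mono) auto
  also have "\<dots> = ff z1" by (simp add: f_eq Mi_def)
  finally show ?thesis using that rz1 by blast
qed

theorem main_result:
  assumes eps: "\<epsilon> > 0"
  shows "(\<exists>!\<sigma>. a0' < \<sigma> \<and> alpha_f m A \<tau> w \<sigma> = 1 / \<epsilon>) \<and>
         (\<forall>\<sigma>. a0' < \<sigma> \<and> alpha_f m A \<tau> w \<sigma> = 1 / \<epsilon> \<longrightarrow> \<sigma> = alpha_eps m A \<tau> w \<epsilon>)"
proof -
  define T where "T = 1 / \<epsilon>"
  have T0: "T > 0" using eps by (simp add: T_def)
  obtain z1 where z1: "Re z1 > a0'" "ff z1 \<ge> T" using large_near_root[OF T0] by blast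
  define c where "c = Re z1"
  define H where "H = {z. c \<le> Re z}"
  have HD: "H \<subseteq> Dset" using z1(1) in_Dset by (auto simp: H_def c_def)
  define Q where "Q = H \<inter> ff -` {T..}"
  have "closed Q" unfolding Q_def
    by (rule continuous_closed_preimage) (use continuous_on_subset[OF f_cont HD] in \<open>auto simp: H_def intro: closed_halfspace_Re_ge\<close>)
  moreover have "Q \<subseteq> cball 0 (Kc c + Wc c / T)"
  proof
    fix z assume zQ: "z \<in> Q"
    show "z \<in> cball 0 (Kc c + Wc c / T)"
    proof (rule ccontr)
      assume "z \<notin> cball 0 (Kc c + Wc c / T)"
      then have zb: "cmod z > Kc c + Wc c / T" by simp
      have wt: "Wc c / T > 0" using Wc_pos[of c] T0 by simp
      have zK: "cmod z > Kc c" using zb wt by linarith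
      have zc: "Re z \<ge> c" using zQ by (simp add: Q_def H_def)
      have "ff z \<le> Wc c / (cmod z - Kc c)" by (rule f_decay[OF zc zK])
      also have "\<dots> < T"
        using zb wt Wc_pos[of c] T0 zK by (simp add: divide_less_eq field_simps)
      finally show False using zQ by (simp add: Q_def)
    qed
  qed
  then have "bounded Q" using bounded_subset bounded_cball by blast
  ultimately have "compact Q" by (simp add: compact_eq_bounded_closed)
  moreover have "z1 \<in> Q" using z1 by (simp add: Q_def H_def c_def)
  ultimately obtain zs where zs: "zs \<in> Q" "\<And>z. z \<in> Q \<Longrightarrow> Re z \<le> Re zs"
    using continuous_attains_sup[of Q Re] continuous_on_Re continuous_on_id by blast
  define \<sigma>s where "\<sigma>s = Re zs"
  have zsQ: "c \<le> Re zs" "ff zs \<ge> T" using zs(1) by (auto simp: Q_def H_def)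
  have \<sigma>s0: "\<sigma>s > a0'" using zsQ z1(1) by (simp add: \<sigma>s_def c_def)
  have zs_eq: "zs = Complex \<sigma>s (Im zs)" by (simp add: \<sigma>s_def complex_eq_iff)
  have afs_ge: "alpha_f m A \<tau> w \<sigma>s \<ge> T"
    using af_upper[OF \<sigma>s0, of "Im zs"] zsQ zs_eq by simp
  have afs_le: "alpha_f m A \<tau> w \<sigma>s \<le> T"
  proof (rule ccontr)
    assume "\<not> ?thesis"
    then have gt: "alpha_f m A \<tau> w \<sigma>s > T" by simp
    obtain \<omega>0 where om: "alpha_f m A \<tau> w \<sigma>s = ff (Complex \<sigma>s \<omega>0)" using af_max[OF \<sigma>s0] by blast
    define p where "p = Complex \<sigma>s \<omega>0"
    have pD: "p \<in> Dset" using \<sigma>s0 by (intro in_Dset) (simp add: p_def)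
    have e0: "ff p - T > 0" using gt om by (simp add: p_def)
    obtain d where d: "d > 0" "\<And>y. y \<in> Dset \<Longrightarrow> dist y p < d \<Longrightarrow> dist (ff y) (ff p) < ff p - T"
      using f_cont pD e0 unfolding continuous_on_iff by blast
    define y where "y = p + complex_of_real (d/2)"
    have ry: "Re y = \<sigma>s + d/2" by (simp add: y_def p_def)
    have yD: "y \<in> Dset" using \<sigma>s0 d(1) ry by (intro in_Dset) simp
    have "dist y p < d" using d(1) by (simp add: y_def dist_norm)
    then have "dist (ff y) (ff p) < ff p - T" using d(2) yD by blast
    then have "ff y > T" by (simp add: dist_real_def abs_less_iff)
    moreover have "c \<le> Re y" using ry zsQ d(1) by (simp add: \<sigma>s_def)
    ultimately have "y \<in> Q" by (simp add: Q_def H_def)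
    then have "Re y \<le> \<sigma>s" using zs(2) by (simp add: \<sigma>s_def)
    then show False using ry d(1) by simp
  qed
  have afs: "alpha_f m A \<tau> w \<sigma>s = T" using afs_ge afs_le by simp
  have uniq: "\<sigma> = \<sigma>s" if "a0' < \<sigma>" "alpha_f m A \<tau> w \<sigma> = T" for \<sigma>
  proof (rule ccontr)
    assume "\<sigma> \<noteq> \<sigma>s"
    then consider "\<sigma> < \<sigma>s" | "\<sigma>s < \<sigma>" by linarith
    then show False
    proof cases
      case 1 then show False using af_strict[OF that(1) 1] that(2) afs by simp
    next
      case 2 then show False using af_strict[OF \<sigma>s0 2] that(2) afs by simp
    qed
  qed
  have ffzs: "ff zs = T" using zsQ af_upper[OF \<sigma>s0, of "Im zs"] zs_eq afs by simp
  have eps_eq: "alpha_eps m A \<tau> w \<epsilon> = \<sigma>s"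
    unfolding alpha_eps_def
  proof (rule cSup_eq_maximum)
    have "det (FF zs) \<noteq> 0" using det_nz_right \<sigma>s0 by (simp add: \<sigma>s_def)
    then show "\<sigma>s \<in> {Re z |z. det (FF z) \<noteq> 0 \<and> ff z = 1 / \<epsilon>}"
      using ffzs by (auto simp: \<sigma>s_def T_def)
    fix x assume "x \<in> {Re z |z. det (FF z) \<noteq> 0 \<and> ff z = 1 / \<epsilon>}"
    then obtain z where z: "x = Re z" "det (FF z) \<noteq> 0" "ff z = T" by (auto simp: T_def)
    show "x \<le> \<sigma>s"
    proof (rule ccontr)
      assume "\<not> x \<le> \<sigma>s"
      then have gt: "Re z > \<sigma>s" using z(1) by simp
      have rz0: "Re z > a0'" using gt \<sigma>s0 by simp
      have "ff z \<le> alpha_f m A \<tau> w (Re z)"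
        using af_upper[OF rz0, of "Im z"] by (simp add: complex_eq_iff[symmetric])
      also have "\<dots> < alpha_f m A \<tau> w \<sigma>s" by (rule af_strict[OF \<sigma>s0 gt])
      finally show False using z(3) afs by simp
    qed
  qed
  show ?thesis
  proof (intro conjI allI impI)
    show "\<exists>!\<sigma>. a0' < \<sigma> \<and> alpha_f m A \<tau> w \<sigma> = 1 / \<epsilon>"
      using \<sigma>s0 afs uniq by (auto simp: T_def)
    fix \<sigma> assume "a0' < \<sigma> \<and> alpha_f m A \<tau> w \<sigma> = 1 / \<epsilon>"
    then show "\<sigma> = alpha_eps m A \<tau> w \<epsilon>" using uniq eps_eq by (auto simp: T_def)
  qed
qed

end


theorem mainTheorem3:
  fixes m :: nat and A :: "nat \<Rightarrow> complex^'n^'n" and \<tau> w :: "nat \<Rightarrow> real" and \<epsilon> :: real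
  assumes "\<tau> 0 = 0" and "\<forall>i\<in>{1..m}. \<tau> i \<ge> 0" and "\<forall>i\<in>{0..m}. w i > 0" and "\<epsilon> > 0"
  shows "(\<exists>!\<sigma>. alpha0 m A \<tau> < \<sigma> \<and> alpha_f m A \<tau> w \<sigma> = 1 / \<epsilon>) \<and>
         (\<forall>\<sigma>. alpha0 m A \<tau> < \<sigma> \<and> alpha_f m A \<tau> w \<sigma> = 1 / \<epsilon> \<longrightarrow> \<sigma> = alpha_eps m A \<tau> w \<epsilon>)"
proof -
  interpret dde m A \<tau> w using assms(1-3) by unfold_locales
  show ?thesis using main_result[OF assms(4)] by simp
qed

end
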